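(* Let $I_{H,\Delta,d}$ be a reducible hidden variable ideal, i.e. $\Delta$ is reducible with components $\Delta_1,\Delta_2$ and separator $S$, and $H\cap S=\emptyset$. Let $H_l=H\cap|\Delta_l|$ and let $d^l$ be the restriction of $d$ to $|\Delta_l|$. In each of the rings $\mathbb{K}[q]$, $\mathbb{K}[q]_1$, $\mathbb{K}[q]_2$ grade the variables by $\deg q_{\mathbf{i}}=e_{\mathbf{i}_S}\in\mathbb{Z}^{D_S}$, and let $\mathcal{A}=\{e_\sigma:\sigma\in D_S\}$. Then $\mathcal{A}$ is linearly independent and $$I_{H,\Delta,d}=I_{H_1,\Delta_1,d^1}\times_{\mathcal{A}}I_{H_2,\Delta_2,d^2},$$ where the toric fiber product variable corresponding to $q_{\mathbf{i}}$ is the product of the variables of $\mathbb{K}[q]_1$ and $\mathbb{K}[q]_2$ obtained by restricting $\mathbf{i}$ to $|\Delta_1|$ and $|\Delta_2|$.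
   Context: $\mathbb{K}$ is a field. $\Delta$ is a simplicial complex on $[n]$ with $|\Delta|:=\bigcup_{F\in\Delta}F=[n]$, $d=(d_1,\dots,d_n)$ with $d_i\ge2$; $D_F=\prod_{k\in F}[d_k]$ and $\mathbf{i}_F$ denotes restriction of an index vector to $F$. $\mathbb{K}[p]=\mathbb{K}[p_{\mathbf{i}}:\mathbf{i}\in D_{[n]}]$, $\mathbb{K}[a]=\mathbb{K}[a^F_{\mathbf{j}_F}:F\in\mathrm{facet}(\Delta),\mathbf{j}_F\in D_F]$, $\phi_{\Delta,d}:p_{\mathbf{i}}\mapsto\prod_{F\in\mathrm{facet}(\Delta)}a^F_{\mathbf{i}_F}$. $H\subseteq[n]$ is the set of hidden nodes, $O=[n]\setminus H$. $\mathbb{K}[q]=\mathbb{K}[q_{\mathbf{i}}]$ with $\mathbf{i}$ having entries $\mathbf{i}_O\in D_O$ and $i_l=\bullet$ for $l\in H$. $\psi_H:\mathbb{K}[q]\to\mathbb{K}[p]$, $q_{\mathbf{i}}\mapsto\sum_{\mathbf{j}_H\in D_H}p_{\mathbf{i}_O\mathbf{j}_H}$, where $p_{\mathbf{i}_O\mathbf{j}_H}$ is the variable with index $\mathbf{i}_O$ on $O$ and $\mathbf{j}_H$ on $H$. The hidden variable ideal is $I_{H,\Delta,d}=\ker(\phi_{\Delta,d}\circ\psi_H)$. $\Delta$ is reducible if there are subcomplexes $\Delta_1,\Delta_2$ with $\Delta_1\cup\Delta_2=\Delta$ and $\Delta_1\cap\Delta_2=2^S$ for some $S\subseteq[n]$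 (the separator); $I_{H,\Delta,d}$ is called reducible if moreover $H\cap S=\emptyset$. $\mathbb{K}[q]_l$ and $I_{H_l,\Delta_l,d^l}$ are defined in the same way for $\Delta_l$ on the vertex set $|\Delta_l|$ with hidden set $H_l$. $e_\sigma$ is the standard unit vector of $\mathbb{Z}^{D_S}$ at $\sigma$. Toric fiber product: for polynomial rings $\mathbb{K}[x^i_j]$, $\mathbb{K}[y^i_k]$ graded by $\deg x^i_j=\deg y^i_k=\mathbf{a}^i$ and homogeneous ideals $I,J$, $I\times_{\mathcal{A}}J$ is the kernel of $\mathbb{K}[z^i_{jk}]\to\mathbb{K}[x]/I\otimes_{\mathbb{K}}\mathbb{K}[y]/J$, $z^i_{jk}\mapsto x^i_j\otimes y^i_k$. *)

theory Defs
  imports "HOL-Library.Poly_Mapping" "HOL-Library.FuncSet"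
begin

text \<open>The polynomial ring in a set X of variables is the set of polynomials all of whose
variables lie in X.\<close>

type_synonym ('v, 'k) mpoly = "('v \<Rightarrow>\<^sub>0 nat) \<Rightarrow>\<^sub>0 'k"

definition Var :: "'v \<Rightarrow> ('v, 'k::comm_ring_1) mpoly" where
  "Var v = Poly_Mapping.single (Poly_Mapping.single v 1) 1"

definition Const :: "'k::comm_ring_1 \<Rightarrow> ('v, 'k) mpoly" where
  "Const c = Poly_Mapping.single 0 c"

definition vars :: "('v, 'k::zero) mpoly \<Rightarrow> 'v set" where
  "vars p = \<Union> (Poly_Mapping.keys ` Poly_Mapping.keys p)"

definition mp_subst :: "('v \<Rightarrow> ('w, 'k::comm_ring_1) mpoly) \<Rightarrow> ('v, 'k) mpoly \<Rightarrow> ('w, 'k) mpoly" where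
  "mp_subst f p = (\<Sum>m\<in>Poly_Mapping.keys p. Const (Poly_Mapping.lookup p m) * (\<Prod>v\<in>Poly_Mapping.keys m. f v ^ Poly_Mapping.lookup m v))"

definition mp_rename :: "('v \<Rightarrow> 'w) \<Rightarrow> ('v, 'k::comm_ring_1) mpoly \<Rightarrow> ('w, 'k) mpoly" where
  "mp_rename g p = mp_subst (\<lambda>v. Var (g v)) p"

definition ideal_gen :: "('v, 'k::comm_ring_1) mpoly set \<Rightarrow> ('v, 'k) mpoly set" where
  "ideal_gen S = {\<Sum>s\<in>T. c s * s | T c. finite T \<and> T \<subseteq> S}"

definition mdeg :: "('v \<Rightarrow> 'c \<Rightarrow> int) \<Rightarrow> ('v \<Rightarrow>\<^sub>0 nat) \<Rightarrow> 'c \<Rightarrow> int" where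
  "mdeg deg m = (\<lambda>\<tau>. \<Sum>v\<in>Poly_Mapping.keys m. int (Poly_Mapping.lookup m v) * deg v \<tau>)"

definition hcomp :: "('v \<Rightarrow> 'c \<Rightarrow> int) \<Rightarrow> ('c \<Rightarrow> int) \<Rightarrow> ('v, 'k::zero) mpoly \<Rightarrow> ('v, 'k) mpoly" where
  "hcomp deg a f = Abs_poly_mapping (\<lambda>m. Poly_Mapping.lookup f m when mdeg deg m = a)"

definition homogeneous_ideal ::
  "('v \<Rightarrow> 'c \<Rightarrow> int) \<Rightarrow> 'v set \<Rightarrow> ('v, 'k::comm_ring_1) mpoly set \<Rightarrow> bool" where
  "homogeneous_ideal deg X I \<longleftrightarrow>
     I \<subseteq> {f. vars f \<subseteq> X} \<and> 0 \<in> I \<and>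
     (\<forall>f\<in>I. \<forall>g\<in>I. f + g \<in> I) \<and>
     (\<forall>f\<in>I. \<forall>h. vars h \<subseteq> X \<longrightarrow> h * f \<in> I) \<and>
     (\<forall>f\<in>I. \<forall>a. hcomp deg a f \<in> I)"

text \<open>The toric fiber product is the
kernel of K[z] -> K[X]/I \<otimes> K[Y]/J, z_(x,y) |-> x \<otimes> y, where the tensor
product is identified with K[X \<squnion> Y]/(I + J) (disjoint union via Inl/Inr).\<close>
definition toric_fiber_product ::
  "('a \<Rightarrow> 'c \<Rightarrow> int) \<Rightarrow> 'a set \<Rightarrow> ('b \<Rightarrow> 'c \<Rightarrow> int) \<Rightarrow> 'b set \<Rightarrow>
   ('a, 'k::comm_ring_1) mpoly set \<Rightarrow> ('b, 'k) mpoly set \<Rightarrow> ('a \<times> 'b, 'k) mpoly set" where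
  "toric_fiber_product deg1 X deg2 Y I J =
     {f. vars f \<subseteq> {(x, y). x \<in> X \<and> y \<in> Y \<and> deg1 x = deg2 y} \<and>
         mp_subst (\<lambda>(x, y). Var (Inl x) * Var (Inr y)) f
           \<in> ideal_gen (mp_rename Inl ` I \<union> mp_rename Inr ` J)}"

definition simplicial_complex :: "nat set \<Rightarrow> nat set set \<Rightarrow> bool" where
  "simplicial_complex V \<Delta> \<longleftrightarrow> (\<forall>F\<in>\<Delta>. F \<subseteq> V) \<and> (\<forall>F\<in>\<Delta>. \<forall>G. G \<subseteq> F \<longrightarrow> G \<in> \<Delta>)"

definition facets :: "nat set set \<Rightarrow> nat set set" where
  "facets \<Delta> = {F\<in>\<Delta>. \<forall>G\<in>\<Delta>. F \<subseteq> G \<longrightarrow> G = F}"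

text \<open>D_F = prod_{k in F} [d_k]; index vectors are extensional functions on F.\<close>
definition Dset :: "(nat \<Rightarrow> nat) \<Rightarrow> nat set \<Rightarrow> (nat \<Rightarrow> nat) set" where
  "Dset d F = (\<Pi>\<^sub>E k\<in>F. {1..d k})"

text \<open>phi_{Delta,d}: p_i |-> prod_{F facet} a^F_{i_F}; variables a^F_j are pairs (F, j).\<close>
definition phi_map :: "nat set set \<Rightarrow> (nat \<Rightarrow> nat) \<Rightarrow> (nat set \<times> (nat \<Rightarrow> nat), 'k::comm_ring_1) mpoly" where
  "phi_map \<Delta> i = (\<Prod>F\<in>facets \<Delta>. Var (F, restrict i F))"

definition psi_map :: "(nat \<Rightarrow> nat) \<Rightarrow> nat set \<Rightarrow> (nat \<Rightarrow> nat) \<Rightarrow> (nat \<Rightarrow> nat, 'k::comm_ring_1) mpoly" where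
  "psi_map d H i = (\<Sum>j\<in>Dset d H. Var (\<lambda>k. if k \<in> H then j k else i k))"

definition hidden_ideal :: "nat set \<Rightarrow> nat set set \<Rightarrow> (nat \<Rightarrow> nat) \<Rightarrow> (nat \<Rightarrow> nat, 'k::comm_ring_1) mpoly set" where
  "hidden_ideal H \<Delta> d =
     {f. vars f \<subseteq> Dset d (\<Union>\<Delta> - H) \<and>
         mp_subst (phi_map \<Delta>) (mp_subst (psi_map d H) f) = (0 :: (_, 'k) mpoly)}"

definition unitvec :: "(nat \<Rightarrow> nat) \<Rightarrow> (nat \<Rightarrow> nat) \<Rightarrow> int" where
  "unitvec \<sigma> = (\<lambda>\<tau>. if \<tau> = \<sigma> then 1 else 0)"

end

theory Submission
  imports Defs
begin


lemma poly_expand: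
  fixes p :: "'a \<Rightarrow>\<^sub>0 'b::comm_monoid_add"
  shows "p = (\<Sum>m\<in>Poly_Mapping.keys p. Poly_Mapping.single m (Poly_Mapping.lookup p m))"
proof (rule poly_mapping_eqI)
  fix k
  have "Poly_Mapping.lookup (\<Sum>m\<in>Poly_Mapping.keys p. Poly_Mapping.single m (Poly_Mapping.lookup p m)) k
      = (\<Sum>m\<in>Poly_Mapping.keys p. (Poly_Mapping.lookup p m when m = k))"
    by (simp add: lookup_sum lookup_single)
  also have "\<dots> = Poly_Mapping.lookup p k"
  proof (cases "k \<in> Poly_Mapping.keys p")
    case True
    then show ?thesis
      by (simp add: sum.remove[OF finite_keys True] when_def)
  next
    case False
    then show ?thesis
      by (auto simp: when_def in_keys_iff intro!: sum.neutral)
  qed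
  finally show "Poly_Mapping.lookup p k = Poly_Mapping.lookup (\<Sum>m\<in>Poly_Mapping.keys p. Poly_Mapping.single m (Poly_Mapping.lookup p m)) k"
    by simp
qed

lemma poly_expand_superset:
  fixes p :: "'a \<Rightarrow>\<^sub>0 'b::comm_monoid_add"
  assumes "finite A" "Poly_Mapping.keys p \<subseteq> A"
  shows "p = (\<Sum>m\<in>A. Poly_Mapping.single m (Poly_Mapping.lookup p m))"
proof -
  have "(\<Sum>m\<in>A. Poly_Mapping.single m (Poly_Mapping.lookup p m))
       = (\<Sum>m\<in>Poly_Mapping.keys p. Poly_Mapping.single m (Poly_Mapping.lookup p m))"
    using assms by (intro sum.mono_neutral_right) (auto simp: in_keys_iff)
  then show ?thesis using poly_expand[of p] by simp
qed

lemma Const_0 [simp]: "Const 0 = 0"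
  by (simp add: Const_def)

lemma Const_1 [simp]: "Const 1 = 1"
  by (simp add: Const_def)

lemma Const_add: "Const (a + b) = Const a + Const b"
  by (simp add: Const_def single_add)

lemma Const_mult: "Const (a * b) = Const a * Const b"
  by (simp add: Const_def mult_single)

lemma Const_uminus: "Const (- a) = - Const a"
  by (simp add: Const_def single_uminus)

lemma Const_diff: "Const (a - b) = Const a - Const b"
  by (simp add: Const_def single_diff)

lemma Const_sum: "Const (sum f A) = (\<Sum>x\<in>A. Const (f x))"
  by (induction A rule: infinite_finite_induct) (auto simp: Const_add)

lemma Const_single: "Const c * Poly_Mapping.single m a = Poly_Mapping.single m (c * a)"
  by (simp add: Const_def mult_single)

lemma lookup_Const_mult:
  "Poly_Mapping.lookup (Const c * p) m = c * Poly_Mapping.lookup p m"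
proof -
  have "Const c * p = (\<Sum>n\<in>Poly_Mapping.keys p. Poly_Mapping.single n (c * Poly_Mapping.lookup p n))"
    by (subst poly_expand[of p]) (simp add: sum_distrib_left Const_single)
  also have "Poly_Mapping.lookup \<dots> m = (\<Sum>n\<in>Poly_Mapping.keys p. (c * Poly_Mapping.lookup p n when n = m))"
    by (simp add: lookup_sum lookup_single)
  also have "\<dots> = c * Poly_Mapping.lookup p m"
  proof (cases "m \<in> Poly_Mapping.keys p")
    case True
    then show ?thesis by (simp add: sum.remove[OF finite_keys True] when_def)
  next
    case False
    then show ?thesis by (auto simp: when_def in_keys_iff intro!: sum.neutral)
  qed
  finally show ?thesis .
qed

lemma Const_mult_Const_mult: "Const a * (Const b * p) = Const (a*b) * p"
  by (simp add: Const_mult mult.assoc)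

definition mon_eval :: "('v \<Rightarrow> ('w, 'k::comm_ring_1) mpoly) \<Rightarrow> ('v \<Rightarrow>\<^sub>0 nat) \<Rightarrow> ('w, 'k) mpoly" where
  "mon_eval f m = (\<Prod>v\<in>Poly_Mapping.keys m. f v ^ Poly_Mapping.lookup m v)"

lemma mon_eval_superset:
  assumes "finite A" "Poly_Mapping.keys m \<subseteq> A"
  shows "mon_eval f m = (\<Prod>v\<in>A. f v ^ Poly_Mapping.lookup m v)"
  unfolding mon_eval_def using assms
  by (intro prod.mono_neutral_left) (auto simp: in_keys_iff)

lemma mon_eval_zero [simp]: "mon_eval f 0 = 1"
  by (simp add: mon_eval_def)

lemma mon_eval_add: "mon_eval f (m1 + m2) = mon_eval f m1 * mon_eval f m2"
proof -
  let ?A = "Poly_Mapping.keys m1 \<union> Poly_Mapping.keys m2"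
  have "mon_eval f (m1 + m2) = (\<Prod>v\<in>?A. f v ^ Poly_Mapping.lookup (m1 + m2) v)"
    by (rule mon_eval_superset) (use keys_add[of m1 m2] in auto)
  also have "\<dots> = (\<Prod>v\<in>?A. f v ^ Poly_Mapping.lookup m1 v) * (\<Prod>v\<in>?A. f v ^ Poly_Mapping.lookup m2 v)"
    by (simp add: lookup_add power_add prod.distrib)
  also have "\<dots> = mon_eval f m1 * mon_eval f m2"
    by (subst (1 2) mon_eval_superset[symmetric]) auto
  finally show ?thesis .
qed

lemma mon_eval_single: "mon_eval f (Poly_Mapping.single v e) = f v ^ e"
  by (simp add: mon_eval_def)

lemma mon_eval_cong:
  assumes "\<And>v. v \<in> Poly_Mapping.keys m \<Longrightarrow> f v = g v"
  shows "mon_eval f m = mon_eval g m"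
  unfolding mon_eval_def using assms by (intro prod.cong) auto

section \<open>Substitution is a ring homomorphism\<close>

lemma mp_subst_superset:
  assumes "finite A" "Poly_Mapping.keys p \<subseteq> A"
  shows "mp_subst f p = (\<Sum>m\<in>A. Const (Poly_Mapping.lookup p m) * mon_eval f m)"
  unfolding mp_subst_def mon_eval_def[symmetric] using assms
  by (intro sum.mono_neutral_left) (auto simp: in_keys_iff)

lemma mp_subst_eq: "mp_subst f p = (\<Sum>m\<in>Poly_Mapping.keys p. Const (Poly_Mapping.lookup p m) * mon_eval f m)"
  unfolding mp_subst_def mon_eval_def ..

lemma mp_subst_zero [simp]: "mp_subst f 0 = 0"
  by (simp add: mp_subst_def)

lemma mp_subst_single: "mp_subst f (Poly_Mapping.single m c) = Const c * mon_eval f m"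
  by (subst mp_subst_superset[of "{m}"]) auto

lemma mp_subst_add: "mp_subst f (p + q) = mp_subst f p + mp_subst f q"
proof -
  let ?A = "Poly_Mapping.keys p \<union> Poly_Mapping.keys q"
  have "mp_subst f (p + q) = (\<Sum>m\<in>?A. Const (Poly_Mapping.lookup (p+q) m) * mon_eval f m)"
    by (rule mp_subst_superset) (use keys_add[of p q] in auto)
  also have "\<dots> = (\<Sum>m\<in>?A. Const (Poly_Mapping.lookup p m) * mon_eval f m) + (\<Sum>m\<in>?A. Const (Poly_Mapping.lookup q m) * mon_eval f m)"
    by (simp add: lookup_add Const_add distrib_right sum.distrib)
  also have "\<dots> = mp_subst f p + mp_subst f q"
    by (subst (1 2) mp_subst_superset[symmetric]) auto
  finally show ?thesis .
qed

lemma mp_subst_sum: "mp_subst f (sum g A) = (\<Sum>x\<in>A. mp_subst f (g x))"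
  by (induction A rule: infinite_finite_induct) (auto simp: mp_subst_add)

lemma mp_subst_uminus: "mp_subst f (- p) = - mp_subst f p"
proof -
  have "mp_subst f p + mp_subst f (- p) = 0" using mp_subst_add[of f p "- p"] by simp
  from add.inverse_unique[OF this] show ?thesis by (rule sym)
qed

lemma mp_subst_diff: "mp_subst f (p - q) = mp_subst f p - mp_subst f q"
  using mp_subst_add[of f p "- q"] by (simp add: mp_subst_uminus)

lemma mp_subst_Const_mult_single: "mp_subst f (Const c * Poly_Mapping.single m a) = Const c * mp_subst f (Poly_Mapping.single m a)"
  by (simp add: Const_single mp_subst_single Const_mult mult.assoc)

lemma poly_mult_expand:
  fixes p q :: "('v, 'k::comm_ring_1) mpoly"
  shows "p * q = (\<Sum>m\<in>Poly_Mapping.keys p. \<Sum>n\<in>Poly_Mapping.keys q.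
           Poly_Mapping.single (m + n) (Poly_Mapping.lookup p m * Poly_Mapping.lookup q n))"
proof -
  have "p * q = (\<Sum>m\<in>Poly_Mapping.keys p. Poly_Mapping.single m (Poly_Mapping.lookup p m)) *
                (\<Sum>n\<in>Poly_Mapping.keys q. Poly_Mapping.single n (Poly_Mapping.lookup q n))"
    by (subst (1) poly_expand[of p], subst (1) poly_expand[of q]) (rule refl)
  also have "\<dots> = (\<Sum>m\<in>Poly_Mapping.keys p. \<Sum>n\<in>Poly_Mapping.keys q.
           Poly_Mapping.single (m + n) (Poly_Mapping.lookup p m * Poly_Mapping.lookup q n))"
    by (simp add: sum_product mult_single)
  finally show ?thesis .
qed

lemma mp_subst_mult: "mp_subst f (p * q) = mp_subst f p * mp_subst f q"
proof -
  have "mp_subst f (p * q) = (\<Sum>m\<in>Poly_Mapping.keys p. \<Sum>n\<in>Poly_Mapping.keys q.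
           Const (Poly_Mapping.lookup p m * Poly_Mapping.lookup q n) * mon_eval f (m + n))"
    by (subst poly_mult_expand) (simp add: mp_subst_sum mp_subst_single)
  also have "\<dots> = (\<Sum>m\<in>Poly_Mapping.keys p. Const (Poly_Mapping.lookup p m) * mon_eval f m) *
                  (\<Sum>n\<in>Poly_Mapping.keys q. Const (Poly_Mapping.lookup q n) * mon_eval f n)"
    unfolding sum_product by (intro sum.cong refl) (simp add: mon_eval_add Const_mult algebra_simps)
  also have "\<dots> = mp_subst f p * mp_subst f q"
    by (simp add: mp_subst_eq)
  finally show ?thesis .
qed

lemma mp_subst_Const [simp]: "mp_subst f (Const c) = Const c"
  by (simp add: Const_def mp_subst_single)

lemma mp_subst_one [simp]: "mp_subst f 1 = 1"
  using mp_subst_Const[of f 1] by simp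

lemma mp_subst_Var [simp]: "mp_subst f (Var v) = f v"
  by (simp add: Var_def mp_subst_single mon_eval_single)

lemma mp_subst_power: "mp_subst f (p ^ n) = mp_subst f p ^ n"
  by (induction n) (auto simp: mp_subst_mult)

lemma mp_subst_prod: "mp_subst f (prod g A) = (\<Prod>x\<in>A. mp_subst f (g x))"
  by (induction A rule: infinite_finite_induct) (auto simp: mp_subst_mult)

lemma mp_subst_mon_eval: "mp_subst f (mon_eval g m) = mon_eval (\<lambda>v. mp_subst f (g v)) m"
  by (simp add: mon_eval_def mp_subst_prod mp_subst_power)

lemma mp_subst_comp: "mp_subst g (mp_subst f p) = mp_subst (\<lambda>v. mp_subst g (f v)) p"
  by (simp add: mp_subst_eq[of f] mp_subst_eq[of "\<lambda>v. mp_subst g (f v)"] mp_subst_sum mp_subst_mult mp_subst_mon_eval)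

lemma mp_subst_cong:
  assumes "\<And>v. v \<in> vars p \<Longrightarrow> f v = g v"
  shows "mp_subst f p = mp_subst g p"
  unfolding mp_subst_eq using assms
  by (intro sum.cong refl arg_cong2[where f="(*)"] mon_eval_cong) (auto simp: vars_def)



lemma vars_add: "vars (p + q) \<subseteq> vars p \<union> vars q"
  unfolding vars_def using keys_add[of p q] by auto

lemma keys_monom_add: "Poly_Mapping.keys (m1 + m2 :: 'v \<Rightarrow>\<^sub>0 nat) \<subseteq> Poly_Mapping.keys m1 \<union> Poly_Mapping.keys m2"
  by (rule keys_add)

lemma vars_mult: "vars (p * q) \<subseteq> vars p \<union> vars q"
proof
  fix v assume "v \<in> vars (p * q)"
  then obtain m where m: "m \<in> Poly_Mapping.keys (p * q)" "v \<in> Poly_Mapping.keys m"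
    by (auto simp: vars_def)
  from m(1) keys_mult[of p q] obtain a b where "m = a + b" "a \<in> Poly_Mapping.keys p" "b \<in> Poly_Mapping.keys q"
    by blast
  with m(2) keys_monom_add[of a b] show "v \<in> vars p \<union> vars q"
    by (auto simp: vars_def)
qed

lemma vars_zero [simp]: "vars 0 = {}"
  by (simp add: vars_def)

lemma vars_Const [simp]: "vars (Const c) = {}"
  by (simp add: vars_def Const_def)

lemma vars_one [simp]: "vars (1 :: ('v, 'k::comm_ring_1) mpoly) = {}"
  using vars_Const[of "1::'k"] by simp

lemma vars_Var: "vars (Var v :: ('v, 'k::comm_ring_1) mpoly) \<subseteq> {v}"
  by (simp add: vars_def Var_def)

lemma vars_sum: "vars (sum f A) \<subseteq> (\<Union>x\<in>A. vars (f x))"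
proof (induction A rule: infinite_finite_induct)
  case (insert x F)
  then show ?case using vars_add[of "f x" "sum f F"] by auto
qed auto

lemma vars_prod: "vars (prod f A :: ('v, 'k::comm_ring_1) mpoly) \<subseteq> (\<Union>x\<in>A. vars (f x))"
proof (induction A rule: infinite_finite_induct)
  case (insert x F)
  then show ?case using vars_mult[of "f x" "prod f F"] by auto
qed auto

lemma vars_power: "vars ((p :: ('v, 'k::comm_ring_1) mpoly) ^ n) \<subseteq> vars p"
proof (induction n)
  case (Suc n)
  then show ?case using vars_mult[of p "p ^ n"] by auto
qed auto

lemma vars_uminus [simp]: "vars (- (p :: ('v, 'k::comm_ring_1) mpoly)) = vars p"
  by (simp add: vars_def keys_minus)

lemma vars_diff: "vars ((p :: ('v, 'k::comm_ring_1) mpoly) - q) \<subseteq> vars p \<union> vars q"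
  using vars_add[of p "- q"] by simp

lemma vars_Const_mult: "vars (Const c * p) \<subseteq> vars p"
  using vars_mult[of "Const c" p] by simp

lemma vars_mon_eval: "vars (mon_eval f m) \<subseteq> (\<Union>v\<in>Poly_Mapping.keys m. vars (f v))"
  unfolding mon_eval_def using vars_prod vars_power by fastforce

lemma vars_subst: "vars (mp_subst f p) \<subseteq> (\<Union>v\<in>vars p. vars (f v))"
proof -
  have "vars (mp_subst f p) \<subseteq> (\<Union>m\<in>Poly_Mapping.keys p. vars (Const (Poly_Mapping.lookup p m) * mon_eval f m))"
    unfolding mp_subst_eq by (rule vars_sum)
  also have "\<dots> \<subseteq> (\<Union>m\<in>Poly_Mapping.keys p. \<Union>v\<in>Poly_Mapping.keys m. vars (f v))"
    using vars_Const_mult vars_mon_eval by fastforce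
  also have "\<dots> = (\<Union>v\<in>vars p. vars (f v))"
    by (auto simp: vars_def)
  finally show ?thesis .
qed

lemma vars_rename: "vars (mp_rename g p) \<subseteq> g ` vars p"
  unfolding mp_rename_def using vars_subst[of "\<lambda>v. Var (g v)" p] vars_Var by fastforce

lemma Var_power: "(Var v :: ('v, 'k::comm_ring_1) mpoly) ^ e = Poly_Mapping.single (Poly_Mapping.single v e) 1"
proof (induction e)
  case 0
  then show ?case by simp
next
  case (Suc e)
  have "Poly_Mapping.single v (Suc e) = Poly_Mapping.single v 1 + Poly_Mapping.single v e"
    by (simp add: single_add[symmetric])
  then show ?case using Suc by (simp add: Var_def mult_single)
qed

lemma prod_single_one:
  "(\<Prod>x\<in>A. Poly_Mapping.single (M x) (1::'k::comm_ring_1)) = Poly_Mapping.single (\<Sum>x\<in>A. M x) 1"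
  by (induction A rule: infinite_finite_induct) (auto simp: mult_single)

lemma mon_eval_Var: "mon_eval Var m = (Poly_Mapping.single m 1 :: ('v, 'k::comm_ring_1) mpoly)"
proof -
  have "mon_eval Var m = (Poly_Mapping.single (\<Sum>v\<in>Poly_Mapping.keys m. Poly_Mapping.single v (Poly_Mapping.lookup m v)) 1 :: ('v, 'k) mpoly)"
    unfolding mon_eval_def Var_power prod_single_one ..
  also have "(\<Sum>v\<in>Poly_Mapping.keys m. Poly_Mapping.single v (Poly_Mapping.lookup m v)) = m"
    by (rule poly_expand[symmetric])
  finally show ?thesis .
qed

lemma mp_subst_Var_id: "mp_subst Var p = p"
  unfolding mp_subst_eq mon_eval_Var Const_single
  by (simp add: poly_expand[symmetric])

lemma mp_subst_id_on:
  assumes "\<And>v. v \<in> vars p \<Longrightarrow> f v = Var v"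
  shows "mp_subst f p = p"
  using mp_subst_cong[of p f Var] assms mp_subst_Var_id by metis

lemma mp_rename_id_on:
  assumes "\<And>v. v \<in> vars p \<Longrightarrow> g v = v"
  shows "mp_rename g p = p"
  unfolding mp_rename_def using assms by (intro mp_subst_id_on) auto

lemma mp_rename_Var [simp]: "mp_rename g (Var v) = Var (g v)"
  by (simp add: mp_rename_def)

lemma mp_rename_Const [simp]: "mp_rename g (Const c) = Const c"
  by (simp add: mp_rename_def)

lemma mp_rename_add: "mp_rename g (p + q) = mp_rename g p + mp_rename g q"
  by (simp add: mp_rename_def mp_subst_add)

lemma mp_rename_mult: "mp_rename g (p * q) = mp_rename g p * mp_rename g q"
  by (simp add: mp_rename_def mp_subst_mult)

lemma mp_rename_diff: "mp_rename g (p - q) = mp_rename g p - mp_rename g q"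
  by (simp add: mp_rename_def mp_subst_diff)

lemma mp_rename_zero [simp]: "mp_rename g 0 = 0"
  by (simp add: mp_rename_def)

lemma mp_rename_sum: "mp_rename g (sum f A) = (\<Sum>x\<in>A. mp_rename g (f x))"
  by (simp add: mp_rename_def mp_subst_sum)

lemma mp_rename_prod: "mp_rename g (prod f A) = (\<Prod>x\<in>A. mp_rename g (f x))"
  by (simp add: mp_rename_def mp_subst_prod)

lemma mp_subst_rename: "mp_subst f (mp_rename h p) = mp_subst (\<lambda>v. f (h v)) p"
  by (simp add: mp_rename_def mp_subst_comp)

lemma mp_rename_subst: "mp_rename g (mp_subst f p) = mp_subst (\<lambda>v. mp_rename g (f v)) p"
  by (simp add: mp_rename_def mp_subst_comp)

lemma mp_rename_rename: "mp_rename g (mp_rename h p) = mp_rename (\<lambda>v. g (h v)) p"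
  by (simp add: mp_rename_def mp_subst_comp)

lemma ideal_gen_zero: "0 \<in> ideal_gen S"
  unfolding ideal_gen_def by (rule CollectI, rule exI[of _ "{}"]) auto

lemma ideal_gen_gen: "s \<in> S \<Longrightarrow> c * s \<in> ideal_gen S"
  unfolding ideal_gen_def
  by (rule CollectI, rule exI[of _ "{s}"], rule exI[of _ "\<lambda>_. c"]) auto

lemma ideal_gen_add:
  assumes "x \<in> ideal_gen S" "y \<in> ideal_gen S"
  shows "x + y \<in> ideal_gen S"
proof -
  from assms obtain T1 c1 T2 c2 where
    x: "x = (\<Sum>s\<in>T1. c1 s * s)" "finite T1" "T1 \<subseteq> S" and
    y: "y = (\<Sum>s\<in>T2. c2 s * s)" "finite T2" "T2 \<subseteq> S"
    unfolding ideal_gen_def by blast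
  define c where "c s = (if s \<in> T1 then c1 s else 0) + (if s \<in> T2 then c2 s else 0)" for s
  have "(\<Sum>s\<in>T1 \<union> T2. c s * s) = (\<Sum>s\<in>T1 \<union> T2. (if s \<in> T1 then c1 s * s else 0) + (if s \<in> T2 then c2 s * s else 0))"
    unfolding c_def by (intro sum.cong refl) (simp add: distrib_right)
  also have "\<dots> = (\<Sum>s\<in>T1 \<union> T2. (if s \<in> T1 then c1 s * s else 0)) + (\<Sum>s\<in>T1 \<union> T2. (if s \<in> T2 then c2 s * s else 0))"
    by (rule sum.distrib)
  also have "\<dots> = x + y"
    using x y by (simp add: sum.If_cases Int_absorb1 Int_absorb2)
  finally have sum_eq: "(\<Sum>s\<in>T1 \<union> T2. c s * s) = x + y" .
  have "\<exists>T c'. x + y = (\<Sum>s\<in>T. c' s * s) \<and> finite T \<and> T \<subseteq> S"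
    using x y sum_eq by (intro exI[of _ "T1 \<union> T2"] exI[of _ c]) auto
  then show ?thesis unfolding ideal_gen_def by blast
qed

lemma ideal_gen_sum:
  assumes "\<And>i. i \<in> A \<Longrightarrow> f i \<in> ideal_gen S"
  shows "sum f A \<in> ideal_gen S"
  using assms by (induction A rule: infinite_finite_induct) (auto simp: ideal_gen_zero ideal_gen_add)

lemma ideal_gen_mult:
  assumes "x \<in> ideal_gen S"
  shows "c * x \<in> ideal_gen S"
proof -
  from assms obtain T c1 where x: "x = (\<Sum>s\<in>T. c1 s * s)" "finite T" "T \<subseteq> S"
    unfolding ideal_gen_def by blast
  have "\<exists>T' c'. c * x = (\<Sum>s\<in>T'. c' s * s) \<and> finite T' \<and> T' \<subseteq> S"
    using x by (intro exI[of _ T] exI[of _ "\<lambda>s. c * c1 s"]) (simp add: sum_distrib_left mult.assoc)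
  then show ?thesis unfolding ideal_gen_def by blast
qed

lemma ideal_gen_subst_zero:
  assumes "x \<in> ideal_gen S" "\<And>s. s \<in> S \<Longrightarrow> mp_subst U s = 0"
  shows "mp_subst U x = 0"
proof -
  from assms obtain T c1 where x: "x = (\<Sum>s\<in>T. c1 s * s)" "finite T" "T \<subseteq> S"
    unfolding ideal_gen_def by blast
  then show ?thesis using assms(2) by (auto simp: mp_subst_sum mp_subst_mult intro!: sum.neutral)
qed

section \<open>Homogeneity\<close>

definition homog :: "('w \<Rightarrow> 'c \<Rightarrow> int) \<Rightarrow> ('c \<Rightarrow> int) \<Rightarrow> ('w, 'k::zero) mpoly \<Rightarrow> bool" where
  "homog deg D p \<longleftrightarrow> (\<forall>m\<in>Poly_Mapping.keys p. mdeg deg m = D)"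

lemma mdeg_superset:
  assumes "finite A" "Poly_Mapping.keys m \<subseteq> A"
  shows "mdeg deg m = (\<lambda>\<tau>. \<Sum>v\<in>A. int (Poly_Mapping.lookup m v) * deg v \<tau>)"
  unfolding mdeg_def using assms
  by (intro ext sum.mono_neutral_left) (auto simp: in_keys_iff)

lemma mdeg_add: "mdeg deg (m1 + m2) = (\<lambda>\<tau>. mdeg deg m1 \<tau> + mdeg deg m2 \<tau>)"
proof -
  let ?A = "Poly_Mapping.keys m1 \<union> Poly_Mapping.keys m2"
  have fA: "finite ?A" by simp
  show ?thesis
    apply (subst (1 2 3) mdeg_superset[OF fA])
    using keys_add[of m1 m2] apply (auto simp: lookup_add algebra_simps sum.distrib)
    done
qed

lemma mdeg_zero [simp]: "mdeg deg 0 = (\<lambda>_. 0)"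
  by (simp add: mdeg_def)

lemma mdeg_single: "mdeg deg (Poly_Mapping.single v n) = (\<lambda>\<tau>. int n * deg v \<tau>)"
  by (simp add: mdeg_def)

lemma homog_zero [simp]: "homog deg D 0"
  by (simp add: homog_def)

lemma homog_add: "homog deg D p \<Longrightarrow> homog deg D q \<Longrightarrow> homog deg D (p + q)"
  unfolding homog_def using keys_add[of p q] by blast

lemma homog_sum: "(\<And>x. x \<in> A \<Longrightarrow> homog deg D (f x)) \<Longrightarrow> homog deg D (sum f A)"
  by (induction A rule: infinite_finite_induct) (auto intro: homog_add)

lemma homog_mult: "homog deg D1 p \<Longrightarrow> homog deg D2 q \<Longrightarrow> homog deg (\<lambda>\<tau>. D1 \<tau> + D2 \<tau>) (p * q)"
  unfolding homog_def using keys_mult[of p q] by (fastforce simp: mdeg_add)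

lemma homog_Const: "homog deg (\<lambda>_. 0) (Const c)"
  by (simp add: homog_def Const_def)

lemma homog_one: "homog deg (\<lambda>_. 0) (1 :: ('w, 'k::comm_ring_1) mpoly)"
  using homog_Const[of deg "1::'k"] by simp

lemma homog_Var: "homog deg (deg v) (Var v)"
  by (simp add: homog_def Var_def mdeg_single)

lemma homog_cong: "homog deg D p \<Longrightarrow> D = D' \<Longrightarrow> homog deg D' p"
  by simp

lemma homog_Const_mult: "homog deg D p \<Longrightarrow> homog deg D (Const c * p)"
  using homog_mult[OF homog_Const[of deg c]] by simp

lemma homog_prod:
  assumes "\<And>i. i \<in> A \<Longrightarrow> homog deg (D i) (f i)"
  shows "homog deg (\<lambda>\<tau>. \<Sum>i\<in>A. D i \<tau>) (prod f A :: ('w, 'k::comm_ring_1) mpoly)"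
  using assms
proof (induction A rule: infinite_finite_induct)
  case (infinite A)
  then show ?case using homog_one by simp
next
  case empty
  then show ?case using homog_one by simp
next
  case (insert x F)
  then show ?case using homog_mult[of deg "D x" "f x" "\<lambda>\<tau>. \<Sum>i\<in>F. D i \<tau>" "prod f F"] by simp
qed

lemma homog_power:
  fixes p :: "('w, 'k::comm_ring_1) mpoly"
  assumes "homog deg D p"
  shows "homog deg (\<lambda>\<tau>. int n * D \<tau>) (p ^ n)"
proof (induction n)
  case 0
  then show ?case using homog_one by simp
next
  case (Suc n)
  then show ?case using homog_mult[OF assms Suc] by (simp add: algebra_simps)
qed

lemma homog_mon_eval:
  assumes "\<And>v. v \<in> Poly_Mapping.keys m \<Longrightarrow> homog dega (degq v) (f v)"
  shows "homog dega (mdeg degq m) (mon_eval f m)"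
  unfolding mon_eval_def mdeg_def
  using assms by (intro homog_prod homog_power) auto

lemma lookup_hcomp: "Poly_Mapping.lookup (hcomp deg a f) m = (Poly_Mapping.lookup f m when mdeg deg m = a)"
proof -
  have "finite {m. (Poly_Mapping.lookup f m when mdeg deg m = a) \<noteq> 0}"
    by (rule finite_subset[of _ "Poly_Mapping.keys f"]) (auto simp: in_keys_iff)
  then show ?thesis unfolding hcomp_def by simp
qed

lemma keys_hcomp: "Poly_Mapping.keys (hcomp deg a f) \<subseteq> Poly_Mapping.keys f"
  by (auto simp: in_keys_iff lookup_hcomp)

lemma vars_hcomp: "vars (hcomp deg a f) \<subseteq> vars f"
  unfolding vars_def using keys_hcomp by blast

lemma hcomp_add: "hcomp deg a (p + q) = hcomp deg a p + hcomp deg a q"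
  by (rule poly_mapping_eqI) (simp add: lookup_hcomp lookup_add when_def)

lemma hcomp_zero [simp]: "hcomp deg a 0 = 0"
  by (rule poly_mapping_eqI) (simp add: lookup_hcomp)

lemma hcomp_sum: "hcomp deg a (sum f A) = (\<Sum>x\<in>A. hcomp deg a (f x))"
  by (induction A rule: infinite_finite_induct) (auto simp: hcomp_add)

lemma hcomp_Const_mult: "hcomp deg a (Const c * p) = Const c * hcomp deg a p"
  by (rule poly_mapping_eqI) (simp add: lookup_hcomp lookup_Const_mult when_def)

lemma hcomp_homog:
  assumes "homog deg D p"
  shows "hcomp deg a p = (if D = a then p else 0)"
  using assms by (intro poly_mapping_eqI) (auto simp: lookup_hcomp when_def homog_def in_keys_iff)

lemma subst_hcomp:
  assumes hom: "\<And>v. v \<in> X \<Longrightarrow> homog dega (degq v) (\<Psi> v)"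
    and vf: "vars f \<subseteq> X"
  shows "mp_subst \<Psi> (hcomp degq a f) = hcomp dega a (mp_subst \<Psi> f)"
proof -
  have "mp_subst \<Psi> (hcomp degq a f)
     = (\<Sum>m\<in>Poly_Mapping.keys f. Const (Poly_Mapping.lookup (hcomp degq a f) m) * mon_eval \<Psi> m)"
    by (rule mp_subst_superset) (auto intro: keys_hcomp[THEN subsetD])
  also have "\<dots> = (\<Sum>m\<in>Poly_Mapping.keys f. hcomp dega a (Const (Poly_Mapping.lookup f m) * mon_eval \<Psi> m))"
  proof (intro sum.cong refl)
    fix m assume m: "m \<in> Poly_Mapping.keys f"
    have "homog dega (mdeg degq m) (mon_eval \<Psi> m)"
      using m vf by (intro homog_mon_eval hom) (auto simp: vars_def)
    then show "Const (Poly_Mapping.lookup (hcomp degq a f) m) * mon_eval \<Psi> m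
        = hcomp dega a (Const (Poly_Mapping.lookup f m) * mon_eval \<Psi> m)"
      by (simp add: hcomp_Const_mult hcomp_homog lookup_hcomp when_def)
  qed
  also have "\<dots> = hcomp dega a (mp_subst \<Psi> f)"
    by (simp add: mp_subst_eq hcomp_sum)
  finally show ?thesis .
qed

lemma homogeneous_ideal_kernel:
  fixes \<Psi> :: "'v \<Rightarrow> ('w, 'k::comm_ring_1) mpoly"
  assumes hom: "\<And>v. v \<in> X \<Longrightarrow> homog dega (degq v) (\<Psi> v)"
  shows "homogeneous_ideal degq X {f. vars f \<subseteq> X \<and> mp_subst \<Psi> f = 0}"
  unfolding homogeneous_ideal_def
proof (intro conjI ballI allI impI)
  show "{f. vars f \<subseteq> X \<and> mp_subst \<Psi> f = 0} \<subseteq> {f. vars f \<subseteq> X}" by blast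
  show "0 \<in> {f. vars f \<subseteq> X \<and> mp_subst \<Psi> f = 0}" by simp
next
  fix f g :: "('v, 'k) mpoly" assume "f \<in> {f. vars f \<subseteq> X \<and> mp_subst \<Psi> f = 0}" "g \<in> {f. vars f \<subseteq> X \<and> mp_subst \<Psi> f = 0}"
  then show "f + g \<in> {f. vars f \<subseteq> X \<and> mp_subst \<Psi> f = 0}"
    using vars_add[of f g] by (auto simp: mp_subst_add)
next
  fix f h :: "('v, 'k) mpoly" assume "f \<in> {f. vars f \<subseteq> X \<and> mp_subst \<Psi> f = 0}" "vars h \<subseteq> X"
  then show "h * f \<in> {f. vars f \<subseteq> X \<and> mp_subst \<Psi> f = 0}"
    using vars_mult[of h f] by (auto simp: mp_subst_mult)
next
  fix f :: "('v, 'k) mpoly" and a assume f: "f \<in> {f. vars f \<subseteq> X \<and> mp_subst \<Psi> f = 0}"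
  then show "hcomp degq a f \<in> {f. vars f \<subseteq> X \<and> mp_subst \<Psi> f = 0}"
    using vars_hcomp[of degq a f] subst_hcomp[of X dega degq \<Psi> f a] hom by auto
qed



definition mapmon :: "('a \<Rightarrow> 'b) \<Rightarrow> ('a \<Rightarrow>\<^sub>0 nat) \<Rightarrow> ('b \<Rightarrow>\<^sub>0 nat)" where
  "mapmon g m = (\<Sum>v\<in>Poly_Mapping.keys m. Poly_Mapping.single (g v) (Poly_Mapping.lookup m v))"

lemma mon_eval_Var_comp: "mon_eval (\<lambda>v. Var (g v)) m = (Poly_Mapping.single (mapmon g m) 1 :: ('b, 'k::comm_ring_1) mpoly)"
  unfolding mon_eval_def Var_power prod_single_one mapmon_def ..

lemma mp_rename_single: "mp_rename g (Poly_Mapping.single m c) = (Poly_Mapping.single (mapmon g m) c :: ('b, 'k::comm_ring_1) mpoly)"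
  by (simp add: mp_rename_def mp_subst_single mon_eval_Var_comp Const_single)

lemma mp_rename_expand: "mp_rename g p = (\<Sum>m\<in>Poly_Mapping.keys p. Poly_Mapping.single (mapmon g m) (Poly_Mapping.lookup p m) :: ('b, 'k::comm_ring_1) mpoly)"
  by (subst (1) poly_expand[of p]) (simp add: mp_rename_sum mp_rename_single)

lemma lookup_mapmon_inj:
  assumes "inj g"
  shows "Poly_Mapping.lookup (mapmon g m) (g v) = Poly_Mapping.lookup m v"
proof -
  have "Poly_Mapping.lookup (mapmon g m) (g v) = (\<Sum>w\<in>Poly_Mapping.keys m. (Poly_Mapping.lookup m w when w = v))"
    unfolding mapmon_def lookup_sum lookup_single using assms
    by (intro sum.cong refl) (auto simp: when_def inj_eq)
  also have "\<dots> = Poly_Mapping.lookup m v"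
  proof (cases "v \<in> Poly_Mapping.keys m")
    case True
    then show ?thesis by (simp add: sum.remove[OF finite_keys True] when_def)
  next
    case False
    then show ?thesis by (auto simp: when_def in_keys_iff intro!: sum.neutral)
  qed
  finally show ?thesis .
qed

lemma lookup_mapmon_out:
  assumes "\<And>v. g v \<noteq> w"
  shows "Poly_Mapping.lookup (mapmon g m) w = 0"
  unfolding mapmon_def lookup_sum lookup_single using assms
  by (intro sum.neutral) (auto simp: when_def)

lemma mapmon_LR_inj:
  assumes "mapmon Inl m + mapmon Inr n = (mapmon Inl m' + mapmon Inr n' :: ('a + 'b) \<Rightarrow>\<^sub>0 nat)"
  shows "m = m' \<and> n = n'"
proof
  show "m = m'"
  proof (rule poly_mapping_eqI)
    fix v
    have "Poly_Mapping.lookup (mapmon Inl m + mapmon Inr n :: ('a + 'b) \<Rightarrow>\<^sub>0 nat) (Inl v)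
        = Poly_Mapping.lookup (mapmon Inl m' + mapmon Inr n' :: ('a + 'b) \<Rightarrow>\<^sub>0 nat) (Inl v)"
      using assms by simp
    then show "Poly_Mapping.lookup m v = Poly_Mapping.lookup m' v"
      by (simp add: lookup_add lookup_mapmon_inj lookup_mapmon_out)
  qed
  show "n = n'"
  proof (rule poly_mapping_eqI)
    fix v
    have "Poly_Mapping.lookup (mapmon Inl m + mapmon Inr n :: ('a + 'b) \<Rightarrow>\<^sub>0 nat) (Inr v)
        = Poly_Mapping.lookup (mapmon Inl m' + mapmon Inr n' :: ('a + 'b) \<Rightarrow>\<^sub>0 nat) (Inr v)"
      using assms by simp
    then show "Poly_Mapping.lookup n v = Poly_Mapping.lookup n' v"
      by (simp add: lookup_add lookup_mapmon_inj lookup_mapmon_out)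
  qed
qed

lemma double_sum_delta:
  assumes "finite A" "finite B"
  shows "(\<Sum>m\<in>A. \<Sum>n\<in>B. (if m = m0 \<and> n = n0 then f m n else (0::'c::comm_monoid_add)))
       = (if m0 \<in> A \<and> n0 \<in> B then f m0 n0 else 0)"
proof -
  have "(\<Sum>m\<in>A. \<Sum>n\<in>B. (if m = m0 \<and> n = n0 then f m n else 0))
      = (\<Sum>m\<in>A. if m = m0 then (\<Sum>n\<in>B. (if n = n0 then f m n else 0)) else 0)"
    by (intro sum.cong refl) auto
  also have "\<dots> = (if m0 \<in> A then (\<Sum>n\<in>B. (if n = n0 then f m0 n else 0)) else 0)"
    using assms(1) by (simp add: sum.delta)
  also have "\<dots> = (if m0 \<in> A \<and> n0 \<in> B then f m0 n0 else 0)"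
    using assms(2) by (simp add: sum.delta)
  finally show ?thesis .
qed

lemma lookup_LR_product:
  fixes R :: "('a, 'k::comm_ring_1) mpoly" and S :: "('b, 'k) mpoly"
  shows "Poly_Mapping.lookup (mp_rename Inl R * mp_rename Inr S :: ('a + 'b, 'k) mpoly) (mapmon Inl m0 + mapmon Inr n0)
    = Poly_Mapping.lookup R m0 * Poly_Mapping.lookup S n0"
proof -
  have "mp_rename Inl R * mp_rename Inr S = (\<Sum>m\<in>Poly_Mapping.keys R. \<Sum>n\<in>Poly_Mapping.keys S.
      Poly_Mapping.single (mapmon Inl m + mapmon Inr n) (Poly_Mapping.lookup R m * Poly_Mapping.lookup S n) :: ('a + 'b, 'k) mpoly)"
    by (simp add: mp_rename_expand[of Inl R] mp_rename_expand[of Inr S] sum_product mult_single)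
  note eq = this
  have "Poly_Mapping.lookup (mp_rename Inl R * mp_rename Inr S :: ('a + 'b, 'k) mpoly) (mapmon Inl m0 + mapmon Inr n0)
     = (\<Sum>m\<in>Poly_Mapping.keys R. \<Sum>n\<in>Poly_Mapping.keys S.
         (if m = m0 \<and> n = n0 then Poly_Mapping.lookup R m * Poly_Mapping.lookup S n else 0))"
    unfolding eq lookup_sum lookup_single
    by (auto simp: when_def dest: mapmon_LR_inj intro!: sum.cong)
  also have "\<dots> = Poly_Mapping.lookup R m0 * Poly_Mapping.lookup S n0"
    by (subst double_sum_delta) (auto simp: in_keys_iff)
  finally show ?thesis .
qed

lemma coefficient_extraction:
  fixes R :: "'i \<Rightarrow> ('a, 'k::comm_ring_1) mpoly" and S :: "'i \<Rightarrow> ('b, 'k) mpoly"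
  assumes "(\<Sum>k\<in>K. mp_rename Inl (R k) * mp_rename Inr (S k) :: ('a + 'b, 'k) mpoly) = 0"
  shows "(\<Sum>k\<in>K. Const (Poly_Mapping.lookup (S k) n0) * R k) = 0"
proof (rule poly_mapping_eqI)
  fix m0
  have "Poly_Mapping.lookup (\<Sum>k\<in>K. Const (Poly_Mapping.lookup (S k) n0) * R k) m0
     = (\<Sum>k\<in>K. Poly_Mapping.lookup (mp_rename Inl (R k) * mp_rename Inr (S k) :: ('a + 'b, 'k) mpoly) (mapmon Inl m0 + mapmon Inr n0))"
    unfolding lookup_sum lookup_Const_mult lookup_LR_product by (simp add: mult.commute)
  also have "\<dots> = Poly_Mapping.lookup (\<Sum>k\<in>K. mp_rename Inl (R k) * mp_rename Inr (S k) :: ('a + 'b, 'k) mpoly) (mapmon Inl m0 + mapmon Inr n0)"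
    by (simp add: lookup_sum)
  also have "\<dots> = 0" using assms by simp
  finally show "Poly_Mapping.lookup (\<Sum>k\<in>K. Const (Poly_Mapping.lookup (S k) n0) * R k) m0 = Poly_Mapping.lookup 0 m0"
    by simp
qed

lemma sum_elim_identity:
  fixes a b c :: "'i \<Rightarrow> 'r::comm_ring_1"
  assumes "finite K" "k0 \<in> K" "c k0 = 1"
  shows "(\<Sum>k\<in>K. a k * b k) = (\<Sum>k\<in>K. c k * a k) * b k0 + (\<Sum>k\<in>K - {k0}. a k * (b k - c k * b k0))"
proof -
  have "(\<Sum>k\<in>K. c k * a k) * b k0 = (\<Sum>k\<in>K. c k * a k * b k0)"
    by (simp add: sum_distrib_right)
  also have "\<dots> = c k0 * a k0 * b k0 + (\<Sum>k\<in>K - {k0}. c k * a k * b k0)"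
    by (rule sum.remove[OF assms(1,2)])
  finally have "(\<Sum>k\<in>K. c k * a k) * b k0 = a k0 * b k0 + (\<Sum>k\<in>K - {k0}. c k * a k * b k0)"
    using assms(3) by simp
  moreover have "(\<Sum>k\<in>K - {k0}. a k * (b k - c k * b k0)) = (\<Sum>k\<in>K - {k0}. a k * b k) - (\<Sum>k\<in>K - {k0}. c k * a k * b k0)"
    by (simp add: sum_subtractf algebra_simps)
  moreover have "(\<Sum>k\<in>K. a k * b k) = a k0 * b k0 + (\<Sum>k\<in>K - {k0}. a k * b k)"
    using assms by (simp add: sum.remove)
  ultimately show ?thesis by simp
qed

lemma mp_rename_Const_mult: "mp_rename g (Const c * p) = Const c * mp_rename g p"
  by (simp add: mp_rename_mult)

lemma tensor_fam:
  fixes \<Psi>1 :: "'a \<Rightarrow> ('c, 'k::field) mpoly" and \<Psi>2 :: "'b \<Rightarrow> ('d, 'k) mpoly"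
    and p :: "'i \<Rightarrow> ('a, 'k) mpoly" and G :: "'i \<Rightarrow> ('b, 'k) mpoly"
  assumes "finite K" "card K = N" "\<forall>k\<in>K. vars (p k) \<subseteq> X \<and> vars (G k) \<subseteq> Y"
    "(\<Sum>k\<in>K. mp_rename Inl (mp_subst \<Psi>1 (p k)) * mp_rename Inr (mp_subst \<Psi>2 (G k)) :: ('c + 'd, 'k) mpoly) = 0"
  shows "(\<Sum>k\<in>K. mp_rename Inl (p k) * mp_rename Inr (G k) :: ('a + 'b, 'k) mpoly)
     \<in> ideal_gen (mp_rename Inl ` {g. vars g \<subseteq> X \<and> mp_subst \<Psi>1 g = 0} \<union> mp_rename Inr ` {h. vars h \<subseteq> Y \<and> mp_subst \<Psi>2 h = 0})"
  using assms
proof (induction N arbitrary: K G rule: less_induct)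
  case (less N)
  define Id where "Id = ideal_gen (mp_rename Inl ` {g. vars g \<subseteq> X \<and> mp_subst \<Psi>1 g = 0} \<union> mp_rename Inr ` {h. vars h \<subseteq> Y \<and> mp_subst \<Psi>2 h = 0} :: ('a + 'b, 'k) mpoly set)"
  define P where "P k = mp_subst \<Psi>1 (p k)" for k
  define Q where "Q k = mp_subst \<Psi>2 (G k)" for k
  show ?case
  proof (cases "\<exists>lam. (\<Sum>k\<in>K. Const (lam k) * P k) = 0 \<and> (\<exists>k0\<in>K. lam k0 \<noteq> 0)")
    case True
    then obtain lam k0 where lam: "(\<Sum>k\<in>K. Const (lam k) * P k) = 0" and k0: "k0 \<in> K" "lam k0 \<noteq> 0"
      by blast
    define \<mu> where "\<mu> k = lam k / lam k0" for k
    define p' where "p' = (\<Sum>k\<in>K. Const (\<mu> k) * p k)"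
    define G' where "G' k = G k - Const (\<mu> k) * G k0" for k
    have mu0: "\<mu> k0 = 1" using k0 by (simp add: \<mu>_def)
    have "mp_subst \<Psi>1 p' = (\<Sum>k\<in>K. Const (\<mu> k) * P k)"
      by (simp add: p'_def P_def mp_subst_sum mp_subst_mult)
    also have "\<dots> = Const (1 / lam k0) * (\<Sum>k\<in>K. Const (lam k) * P k)"
    proof -
      have h: "Const (\<mu> k) * P k = Const (1 / lam k0) * (Const (lam k) * P k)" for k
        by (simp only: mult.assoc[symmetric] Const_mult[symmetric]) (simp add: \<mu>_def)
      show ?thesis unfolding sum_distrib_left by (rule sum.cong[OF refl h])
    qed
    also have "\<dots> = 0" using lam by simp
    finally have p'0: "mp_subst \<Psi>1 p' = 0" .
    have vp': "vars p' \<subseteq> X"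
      unfolding p'_def using less.prems(3) vars_sum[of "\<lambda>k. Const (\<mu> k) * p k" K] vars_Const_mult by fastforce
    have gen1: "mp_rename Inl p' \<in> mp_rename Inl ` {g. vars g \<subseteq> X \<and> mp_subst \<Psi>1 g = 0}"
      using p'0 vp' by blast
    have first0: "mp_rename Inr (G k0) * mp_rename Inl p' \<in> Id"
      unfolding Id_def by (rule ideal_gen_gen) (use gen1 in blast)
    have first: "mp_rename Inl p' * mp_rename Inr (G k0) \<in> Id"
      using first0 by (simp only: mult.commute)
    have cmu0: "Const (\<mu> k0) = (1 :: ('a + 'b, 'k) mpoly)" using mu0 by simp
    have cmu0': "Const (\<mu> k0) = (1 :: ('c + 'd, 'k) mpoly)" using mu0 by simp
    have rp': "(mp_rename Inl p' :: ('a + 'b, 'k) mpoly) = (\<Sum>k\<in>K. Const (\<mu> k) * mp_rename Inl (p k))"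
      by (simp add: p'_def mp_rename_sum mp_rename_mult)
    have rG': "(mp_rename Inr (G' k) :: ('a + 'b, 'k) mpoly) = mp_rename Inr (G k) - Const (\<mu> k) * mp_rename Inr (G k0)" for k
      by (simp add: G'_def mp_rename_diff mp_rename_mult)
    have eq1: "(\<Sum>k\<in>K. mp_rename Inl (p k) * mp_rename Inr (G k) :: ('a + 'b, 'k) mpoly)
       = mp_rename Inl p' * mp_rename Inr (G k0) + (\<Sum>k\<in>K - {k0}. mp_rename Inl (p k) * mp_rename Inr (G' k))"
      unfolding rp' rG'
      by (rule sum_elim_identity[where c = "\<lambda>k. Const (\<mu> k)", OF less.prems(1) k0(1) cmu0])
    have rQ': "(mp_rename Inr (mp_subst \<Psi>2 (G' k)) :: ('c + 'd, 'k) mpoly) = mp_rename Inr (Q k) - Const (\<mu> k) * mp_rename Inr (Q k0)" for k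
      by (simp add: G'_def Q_def mp_rename_diff mp_rename_mult mp_subst_diff mp_subst_mult)
    have rP': "(mp_rename Inl (\<Sum>k\<in>K. Const (\<mu> k) * P k) :: ('c + 'd, 'k) mpoly) = (\<Sum>k\<in>K. Const (\<mu> k) * mp_rename Inl (P k))"
      by (simp add: mp_rename_sum mp_rename_mult)
    have eq2: "(\<Sum>k\<in>K. mp_rename Inl (P k) * mp_rename Inr (Q k) :: ('c + 'd, 'k) mpoly)
       = mp_rename Inl (\<Sum>k\<in>K. Const (\<mu> k) * P k) * mp_rename Inr (Q k0) + (\<Sum>k\<in>K - {k0}. mp_rename Inl (P k) * mp_rename Inr (mp_subst \<Psi>2 (G' k)))"
      unfolding rP' rQ'
      by (rule sum_elim_identity[where c = "\<lambda>k. Const (\<mu> k)", OF less.prems(1) k0(1) cmu0'])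
    have z1: "(\<Sum>k\<in>K. Const (\<mu> k) * P k) = 0"
      using p'0 by (simp add: p'_def P_def mp_subst_sum mp_subst_mult)
    have z2: "(\<Sum>k\<in>K. mp_rename Inl (P k) * mp_rename Inr (Q k) :: ('c + 'd, 'k) mpoly) = 0"
      using less.prems(4) by (simp only: P_def Q_def)
    have rest0: "(\<Sum>k\<in>K - {k0}. mp_rename Inl (mp_subst \<Psi>1 (p k)) * mp_rename Inr (mp_subst \<Psi>2 (G' k)) :: ('c + 'd, 'k) mpoly) = 0"
      using eq2 unfolding z1 z2 by (simp add: P_def)
    have cK: "card K > 0" using k0(1) less.prems(1) card_gt_0_iff by blast
    have card_less: "card (K - {k0}) < N"
      using less.prems(2) k0(1) cK by (simp add: card_Diff_singleton)
    have vG': "\<forall>k\<in>K - {k0}. vars (p k) \<subseteq> X \<and> vars (G' k) \<subseteq> Y"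
    proof
      fix k assume k: "k \<in> K - {k0}"
      have "vars (G' k) \<subseteq> vars (G k) \<union> vars (G k0)"
        unfolding G'_def using vars_diff[of "G k" "Const (\<mu> k) * G k0"] vars_Const_mult[of "\<mu> k" "G k0"] by blast
      then show "vars (p k) \<subseteq> X \<and> vars (G' k) \<subseteq> Y" using less.prems(3) k k0(1) by blast
    qed
    have second: "(\<Sum>k\<in>K - {k0}. mp_rename Inl (p k) * mp_rename Inr (G' k) :: ('a + 'b, 'k) mpoly) \<in> Id"
      unfolding Id_def
      by (rule less.IH[OF card_less _ refl vG' rest0]) (use less.prems(1) in simp)
    show ?thesis
      unfolding eq1 using ideal_gen_add first second unfolding Id_def by blast
  next
    case False
    then have indep: "\<And>lam. (\<Sum>k\<in>K. Const (lam k) * P k) = 0 \<Longrightarrow> \<forall>k\<in>K. lam k = 0"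
      by blast
    have Q0: "Q k = 0" if k: "k \<in> K" for k
    proof (rule poly_mapping_eqI)
      fix n0
      have "(\<Sum>k\<in>K. Const (Poly_Mapping.lookup (Q k) n0) * P k) = 0"
        by (rule coefficient_extraction) (use less.prems(4) in \<open>simp add: P_def Q_def\<close>)
      from indep[OF this] k show "Poly_Mapping.lookup (Q k) n0 = Poly_Mapping.lookup 0 n0" by simp
    qed
    show ?thesis
    proof (rule ideal_gen_sum)
      fix k assume k: "k \<in> K"
      have "mp_rename Inr (G k) \<in> mp_rename Inr ` {h. vars h \<subseteq> Y \<and> mp_subst \<Psi>2 h = 0}"
        using Q0[OF k] less.prems(3) k by (auto simp: Q_def)
      then show "mp_rename Inl (p k) * mp_rename Inr (G k) \<in> ideal_gen (mp_rename Inl ` {g. vars g \<subseteq> X \<and> mp_subst \<Psi>1 g = 0} \<union> mp_rename Inr ` {h. vars h \<subseteq> Y \<and> mp_subst \<Psi>2 h = 0})"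
        by (intro ideal_gen_gen) blast
    qed
  qed
qed

lemma mp_rename_power: "mp_rename g (p ^ n) = mp_rename g p ^ n"
  by (simp add: mp_rename_def mp_subst_power)

lemma single_split_LR:
  fixes M :: "('a + 'b) \<Rightarrow>\<^sub>0 nat"
  shows "(Poly_Mapping.single M c :: ('a + 'b, 'k::comm_ring_1) mpoly)
    = mp_rename Inl (Const c * (\<Prod>x\<in>Inl -` Poly_Mapping.keys M. Var x ^ Poly_Mapping.lookup M (Inl x)))
      * mp_rename Inr (\<Prod>y\<in>Inr -` Poly_Mapping.keys M. Var y ^ Poly_Mapping.lookup M (Inr y))"
proof -
  have fin1: "finite (Inl -` Poly_Mapping.keys M :: 'a set)"
    by (rule finite_vimageI) (auto simp: inj_on_def)
  have fin2: "finite (Inr -` Poly_Mapping.keys M :: 'b set)"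
    by (rule finite_vimageI) (auto simp: inj_on_def)
  have keys_split: "Poly_Mapping.keys M = Inl ` (Inl -` Poly_Mapping.keys M) \<union> Inr ` (Inr -` Poly_Mapping.keys M)"
  proof (rule set_eqI)
    fix v show "v \<in> Poly_Mapping.keys M \<longleftrightarrow> v \<in> Inl ` (Inl -` Poly_Mapping.keys M) \<union> Inr ` (Inr -` Poly_Mapping.keys M)"
      by (cases v) auto
  qed
  have "(Poly_Mapping.single M c :: ('a + 'b, 'k) mpoly) = Const c * mon_eval Var M"
    by (simp add: mon_eval_Var Const_single)
  also have "mon_eval Var M = (\<Prod>v\<in>Inl ` (Inl -` Poly_Mapping.keys M) \<union> Inr ` (Inr -` Poly_Mapping.keys M). (Var v :: ('a + 'b, 'k) mpoly) ^ Poly_Mapping.lookup M v)"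
    unfolding mon_eval_def by (subst keys_split) (rule refl)
  also have "\<dots> = (\<Prod>v\<in>Inl ` (Inl -` Poly_Mapping.keys M). (Var v :: ('a + 'b, 'k) mpoly) ^ Poly_Mapping.lookup M v)
     * (\<Prod>v\<in>Inr ` (Inr -` Poly_Mapping.keys M). (Var v :: ('a + 'b, 'k) mpoly) ^ Poly_Mapping.lookup M v)"
    by (rule prod.union_disjoint) (use fin1 fin2 in auto)
  also have "\<dots> = (\<Prod>x\<in>Inl -` Poly_Mapping.keys M. (Var (Inl x) :: ('a + 'b, 'k) mpoly) ^ Poly_Mapping.lookup M (Inl x))
     * (\<Prod>y\<in>Inr -` Poly_Mapping.keys M. (Var (Inr y) :: ('a + 'b, 'k) mpoly) ^ Poly_Mapping.lookup M (Inr y))"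
    by (subst (1 2) prod.reindex) (auto simp: inj_on_def)
  finally show ?thesis
    by (simp add: mp_rename_mult mp_rename_prod mp_rename_power mult.assoc)
qed

lemma vars_prod_Var_power:
  "vars (\<Prod>x\<in>A. (Var x :: ('a, 'k::comm_ring_1) mpoly) ^ e x) \<subseteq> A"
  using vars_prod[of "\<lambda>x. (Var x :: ('a, 'k) mpoly) ^ e x" A] vars_power vars_Var by fastforce

lemma tensor_kernel:
  fixes \<Psi>1 :: "'a \<Rightarrow> ('c, 'k::field) mpoly" and \<Psi>2 :: "'b \<Rightarrow> ('d, 'k) mpoly"
    and E :: "('a + 'b, 'k) mpoly"
  assumes vE: "vars E \<subseteq> Inl ` X \<union> Inr ` Y"
    and zE: "mp_subst (case_sum (\<lambda>x. mp_rename Inl (\<Psi>1 x)) (\<lambda>y. mp_rename Inr (\<Psi>2 y))) E = (0 :: ('c + 'd, 'k) mpoly)"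
  shows "E \<in> ideal_gen (mp_rename Inl ` {g. vars g \<subseteq> X \<and> mp_subst \<Psi>1 g = 0} \<union> mp_rename Inr ` {h. vars h \<subseteq> Y \<and> mp_subst \<Psi>2 h = 0})"
proof -
  define U where "U = case_sum (\<lambda>x. mp_rename Inl (\<Psi>1 x)) (\<lambda>y. mp_rename Inr (\<Psi>2 y) :: ('c + 'd, 'k) mpoly)"
  define pL where "pL (M :: ('a + 'b) \<Rightarrow>\<^sub>0 nat) = Const (Poly_Mapping.lookup E M) * (\<Prod>x\<in>Inl -` Poly_Mapping.keys M. (Var x :: ('a, 'k) mpoly) ^ Poly_Mapping.lookup M (Inl x))" for M
  define pR where "pR (M :: ('a + 'b) \<Rightarrow>\<^sub>0 nat) = (\<Prod>y\<in>Inr -` Poly_Mapping.keys M. (Var y :: ('b, 'k) mpoly) ^ Poly_Mapping.lookup M (Inr y))" for M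
  have E_eq: "E = (\<Sum>M\<in>Poly_Mapping.keys E. mp_rename Inl (pL M) * mp_rename Inr (pR M))"
    by (subst (1) poly_expand[of E]) (simp add: pL_def pR_def single_split_LR[symmetric])
  have vL: "vars (pL M) \<subseteq> X" and vR: "vars (pR M) \<subseteq> Y" if M: "M \<in> Poly_Mapping.keys E" for M
  proof -
    have sub: "Poly_Mapping.keys M \<subseteq> Inl ` X \<union> Inr ` Y"
      using M vE by (auto simp: vars_def)
    have "vars (pL M) \<subseteq> Inl -` Poly_Mapping.keys M"
      unfolding pL_def using vars_Const_mult vars_prod_Var_power by fastforce
    also have "\<dots> \<subseteq> X" using sub by auto
    finally show "vars (pL M) \<subseteq> X" .
    have "vars (pR M) \<subseteq> Inr -` Poly_Mapping.keys M"
      unfolding pR_def using vars_prod_Var_power by fastforce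
    also have "\<dots> \<subseteq> Y" using sub by auto
    finally show "vars (pR M) \<subseteq> Y" .
  qed
  have UL: "mp_subst U (mp_rename Inl p) = mp_rename Inl (mp_subst \<Psi>1 p)" for p :: "('a, 'k) mpoly"
    by (simp add: mp_subst_rename mp_rename_subst U_def)
  have UR: "mp_subst U (mp_rename Inr p) = mp_rename Inr (mp_subst \<Psi>2 p)" for p :: "('b, 'k) mpoly"
    by (simp add: mp_subst_rename mp_rename_subst U_def)
  have "(\<Sum>M\<in>Poly_Mapping.keys E. mp_rename Inl (mp_subst \<Psi>1 (pL M)) * mp_rename Inr (mp_subst \<Psi>2 (pR M)) :: ('c + 'd, 'k) mpoly)
      = mp_subst U E"
    by (subst (2) E_eq) (simp add: mp_subst_sum mp_subst_mult UL UR)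
  also have "\<dots> = 0" using zE by (simp add: U_def)
  finally have z: "(\<Sum>M\<in>Poly_Mapping.keys E. mp_rename Inl (mp_subst \<Psi>1 (pL M)) * mp_rename Inr (mp_subst \<Psi>2 (pR M)) :: ('c + 'd, 'k) mpoly) = 0" .
  show ?thesis
    by (subst E_eq, rule tensor_fam[OF finite_keys refl _ z]) (use vL vR in blast)
qed



section \<open>Generic facts on hidden variable maps\<close>

definition PhiH :: "nat set set \<Rightarrow> (nat \<Rightarrow> nat) \<Rightarrow> nat set \<Rightarrow> (nat \<Rightarrow> nat) \<Rightarrow> (nat set \<times> (nat \<Rightarrow> nat), 'k::comm_ring_1) mpoly" where
  "PhiH D d H i = mp_subst (phi_map D) (psi_map d H i)"

definition mrg :: "nat set \<Rightarrow> (nat \<Rightarrow> nat) \<Rightarrow> (nat \<Rightarrow> nat) \<Rightarrow> nat \<Rightarrow> nat" where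
  "mrg H j i = (\<lambda>k. if k \<in> H then j k else i k)"

lemma PhiH_eq: "PhiH D d H i = (\<Sum>j\<in>Dset d H. \<Prod>F\<in>facets D. Var (F, restrict (mrg H j i) F))"
  by (simp add: PhiH_def psi_map_def mp_subst_sum phi_map_def mrg_def)

lemma hidden_ideal_eq:
  "hidden_ideal H D d = {f. vars f \<subseteq> Dset d (\<Union>D - H) \<and> mp_subst (PhiH D d H) f = (0 :: (_, 'k::comm_ring_1) mpoly)}"
  unfolding hidden_ideal_def PhiH_def by (simp add: mp_subst_comp)

lemma unitvec_inj: "unitvec a = unitvec b \<Longrightarrow> a = b"
  unfolding unitvec_def by (metis one_neq_zero)

lemma facet_above:
  assumes "finite D" "A \<in> D"
  shows "\<exists>F\<in>facets D. A \<subseteq> F"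
proof -
  obtain m where m: "m \<in> {G\<in>D. A \<subseteq> G}" "\<forall>b\<in>{G\<in>D. A \<subseteq> G}. m \<le> b \<longrightarrow> m = b"
    using finite_has_maximal[of "{G\<in>D. A \<subseteq> G}"] assms by auto
  then have "m \<in> facets D" unfolding facets_def by auto
  with m show ?thesis by blast
qed

lemma finite_Dset: "finite F \<Longrightarrow> finite (Dset d F)"
  unfolding Dset_def by (rule finite_PiE) auto

lemma sum_Dset_split:
  assumes "H = H1 \<union> H2" "H1 \<inter> H2 = {}"
  shows "(\<Sum>j\<in>Dset d H. g (restrict j H1) (restrict j H2)) = (\<Sum>j1\<in>Dset d H1. \<Sum>j2\<in>Dset d H2. g j1 j2)"
proof -
  have bij: "bij_betw (\<lambda>j. (restrict j H1, restrict j H2)) (Dset d H) (Dset d H1 \<times> Dset d H2)"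
  proof (rule bij_betwI[where g = "\<lambda>(j1, j2). (\<lambda>k. if k \<in> H1 then j1 k else if k \<in> H2 then j2 k else undefined)"])
    show "(\<lambda>j. (restrict j H1, restrict j H2)) \<in> Dset d H \<rightarrow> Dset d H1 \<times> Dset d H2"
      using assms by (auto simp: Dset_def)
    show "(\<lambda>(j1, j2). (\<lambda>k. if k \<in> H1 then j1 k else if k \<in> H2 then j2 k else undefined)) \<in> Dset d H1 \<times> Dset d H2 \<rightarrow> Dset d H"
      using assms by (auto simp: Dset_def PiE_def Pi_def extensional_def)
    fix j assume "j \<in> Dset d H"
    then show "(\<lambda>(j1, j2). (\<lambda>k. if k \<in> H1 then j1 k else if k \<in> H2 then j2 k else undefined)) (restrict j H1, restrict j H2) = j"
      using assms by (auto simp: Dset_def PiE_def extensional_def fun_eq_iff)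
  next
    fix p assume "p \<in> Dset d H1 \<times> Dset d H2"
    then show "(\<lambda>j. (restrict j H1, restrict j H2)) ((\<lambda>(j1, j2). (\<lambda>k. if k \<in> H1 then j1 k else if k \<in> H2 then j2 k else undefined)) p) = p"
      using assms by (auto simp: Dset_def PiE_def extensional_def fun_eq_iff restrict_def)
  qed
  have "(\<Sum>j\<in>Dset d H. g (restrict j H1) (restrict j H2)) = (\<Sum>p\<in>Dset d H1 \<times> Dset d H2. g (fst p) (snd p))"
    using sum.reindex_bij_betw[OF bij, of "\<lambda>p. g (fst p) (snd p)"] by simp
  also have "\<dots> = (\<Sum>j1\<in>Dset d H1. \<Sum>j2\<in>Dset d H2. g j1 j2)"
    by (rule sum.cartesian_product[symmetric, unfolded split_def])
  finally show ?thesis .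
qed

lemma prod_split_extra:
  assumes "finite A" "B \<subseteq> A" "A - B \<subseteq> {s}"
  shows "prod g A = prod g B * (if s \<in> A \<and> s \<notin> B then g s else 1)"
proof (cases "s \<in> A \<and> s \<notin> B")
  case True
  then have "A = insert s B" using assms by blast
  then show ?thesis using True assms(1) by (simp add: finite_subset[OF assms(2)] mult.commute)
next
  case False
  then have "A = B" using assms by blast
  then show ?thesis using False by simp
qed

lemma homog_PhiH:
  fixes D :: "nat set set" and F1 :: "nat set"
  assumes fin: "finite (facets D)" and F1: "F1 \<in> facets D" "S \<subseteq> F1" and HS: "H \<inter> S = {}"
  shows "homog (\<lambda>(F, j). if F = F1 then unitvec (restrict j S) else (\<lambda>_. 0)) (unitvec (restrict i S)) (PhiH D d H i :: (_, 'k::comm_ring_1) mpoly)"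
  unfolding PhiH_eq
proof (rule homog_sum)
  fix j
  let ?dega = "\<lambda>(F, j). if F = F1 then unitvec (restrict j S) else (\<lambda>_. 0 :: int)"
  have "homog ?dega (\<lambda>\<tau>. \<Sum>F\<in>facets D. ?dega (F, restrict (mrg H j i) F) \<tau>) (\<Prod>F\<in>facets D. (Var (F, restrict (mrg H j i) F) :: (_, 'k) mpoly))"
    by (rule homog_prod) (rule homog_Var)
  moreover have "(\<lambda>\<tau>. \<Sum>F\<in>facets D. ?dega (F, restrict (mrg H j i) F) \<tau>) = unitvec (restrict i S)"
  proof
    fix \<tau>
    have "(\<Sum>F\<in>facets D. ?dega (F, restrict (mrg H j i) F) \<tau>) = (\<Sum>F\<in>facets D. if F = F1 then unitvec (restrict (restrict (mrg H j i) F1) S) \<tau> else 0)"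
      by (intro sum.cong refl) auto
    also have "\<dots> = unitvec (restrict (restrict (mrg H j i) F1) S) \<tau>"
      using fin F1 by simp
    also have "restrict (restrict (mrg H j i) F1) S = restrict i S"
      using F1 HS by (auto simp: restrict_def mrg_def fun_eq_iff)
    finally show "(\<Sum>F\<in>facets D. ?dega (F, restrict (mrg H j i) F) \<tau>) = unitvec (restrict i S) \<tau>" .
  qed
  ultimately show "homog ?dega (unitvec (restrict i S)) (\<Prod>F\<in>facets D. (Var (F, restrict (mrg H j i) F) :: (_, 'k) mpoly))"
    by simp
qed

lemma homogeneous_hidden_ideal:
  assumes fin: "finite D" and SD: "S \<in> D" and HS: "H \<inter> S = {}"
  shows "homogeneous_ideal (\<lambda>i. unitvec (restrict i S)) (Dset d (\<Union>D - H)) (hidden_ideal H D d :: (nat \<Rightarrow> nat, 'k::comm_ring_1) mpoly set)"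
proof -
  obtain F1 where F1: "F1 \<in> facets D" "S \<subseteq> F1" using facet_above[OF fin SD] by blast
  have finf: "finite (facets D)" using fin by (rule finite_subset[rotated]) (auto simp: facets_def)
  show ?thesis
    unfolding hidden_ideal_eq
    by (rule homogeneous_ideal_kernel) (rule homog_PhiH[OF finf F1 HS])
qed

section \<open>The reducible setting\<close>

locale reducible =
  fixes n :: nat and d :: "nat \<Rightarrow> nat" and H S :: "nat set" and \<Delta> \<Delta>1 \<Delta>2 :: "nat set set"
  assumes cx: "simplicial_complex {1..n} \<Delta>" and supp: "\<Union>\<Delta> = {1..n}"
    and hid: "H \<subseteq> {1..n}"
    and sub1: "simplicial_complex (\<Union>\<Delta>1) \<Delta>1" "\<Delta>1 \<subseteq> \<Delta>"
    and sub2: "simplicial_complex (\<Union>\<Delta>2) \<Delta>2" "\<Delta>2 \<subseteq> \<Delta>"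
    and un: "\<Delta>1 \<union> \<Delta>2 = \<Delta>" and sep: "\<Delta>1 \<inter> \<Delta>2 = Pow S"
    and HS: "H \<inter> S = {}"
begin

lemma fin: "finite \<Delta>"
proof -
  have "\<Delta> \<subseteq> Pow {1..n}" using cx by (auto simp: simplicial_complex_def)
  then show ?thesis by (rule finite_subset) simp
qed

lemma fin1: "finite \<Delta>1" using fin sub1(2) by (rule finite_subset[rotated])
lemma fin2: "finite \<Delta>2" using fin sub2(2) by (rule finite_subset[rotated])

lemma finf: "finite (facets \<Delta>)" using fin by (rule finite_subset[rotated]) (auto simp: facets_def)
lemma finf1: "finite (facets \<Delta>1)" using fin1 by (rule finite_subset[rotated]) (auto simp: facets_def)
lemma finf2: "finite (facets \<Delta>2)" using fin2 by (rule finite_subset[rotated]) (auto simp: facets_def)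

lemma S1: "S \<in> \<Delta>1" and S2: "S \<in> \<Delta>2" using sep by auto

lemma down1: "F \<in> \<Delta>1 \<Longrightarrow> G \<subseteq> F \<Longrightarrow> G \<in> \<Delta>1"
  using sub1(1) by (auto simp: simplicial_complex_def)
lemma down2: "F \<in> \<Delta>2 \<Longrightarrow> G \<subseteq> F \<Longrightarrow> G \<in> \<Delta>2"
  using sub2(1) by (auto simp: simplicial_complex_def)

lemma V12: "\<Union>\<Delta>1 \<inter> \<Union>\<Delta>2 \<subseteq> S"
proof
  fix v assume "v \<in> \<Union>\<Delta>1 \<inter> \<Union>\<Delta>2"
  then obtain F G where "F \<in> \<Delta>1" "G \<in> \<Delta>2" "v \<in> F" "v \<in> G" by blast
  then have "{v} \<in> \<Delta>1 \<inter> \<Delta>2" using down1 down2 by blast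
  then show "v \<in> S" using sep by auto
qed

lemma SV1: "S \<subseteq> \<Union>\<Delta>1" using S1 by blast
lemma SV2: "S \<subseteq> \<Union>\<Delta>2" using S2 by blast

lemma V_un: "\<Union>\<Delta>1 \<union> \<Union>\<Delta>2 = {1..n}" using un supp by blast

lemma fac_cases: "F \<in> facets \<Delta> \<Longrightarrow> F \<in> facets \<Delta>1 \<or> F \<in> facets \<Delta>2"
  using un sub1(2) sub2(2) unfolding facets_def by blast

lemma fac1_in: "F \<in> facets \<Delta>1 \<Longrightarrow> F \<noteq> S \<Longrightarrow> F \<in> facets \<Delta>"
proof -
  assume F: "F \<in> facets \<Delta>1" "F \<noteq> S"
  have "G = F" if G: "G \<in> \<Delta>" "F \<subseteq> G" for G
  proof (cases "G \<in> \<Delta>1")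
    case True
    then show ?thesis using F G unfolding facets_def by blast
  next
    case False
    then have "G \<in> \<Delta>2" using un G by blast
    then have "F \<in> \<Delta>2" using down2 G by blast
    moreover have "F \<in> \<Delta>1" using F by (simp add: facets_def)
    ultimately have "F \<subseteq> S" using sep by blast
    then have "S = F" using F S1 unfolding facets_def by blast
    then show ?thesis using F by blast
  qed
  then show ?thesis using F sub1(2) unfolding facets_def by blast
qed

lemma fac2_in: "F \<in> facets \<Delta>2 \<Longrightarrow> F \<noteq> S \<Longrightarrow> F \<in> facets \<Delta>"
proof -
  assume F: "F \<in> facets \<Delta>2" "F \<noteq> S"
  have "G = F" if G: "G \<in> \<Delta>" "F \<subseteq> G" for G
  proof (cases "G \<in> \<Delta>2")
    case True
    then show ?thesis using F G unfolding facets_def by blast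
  next
    case False
    then have "G \<in> \<Delta>1" using un G by blast
    then have "F \<in> \<Delta>1" using down1 G by blast
    moreover have "F \<in> \<Delta>2" using F by (simp add: facets_def)
    ultimately have "F \<subseteq> S" using sep by blast
    then have "S = F" using F S2 unfolding facets_def by blast
    then show ?thesis using F by blast
  qed
  then show ?thesis using F sub2(2) unfolding facets_def by blast
qed

lemma fac_in1: "F \<in> facets \<Delta> \<Longrightarrow> F \<in> \<Delta>1 \<Longrightarrow> F \<in> facets \<Delta>1"
  using sub1(2) unfolding facets_def by blast
lemma fac_in2: "F \<in> facets \<Delta> \<Longrightarrow> F \<in> \<Delta>2 \<Longrightarrow> F \<in> facets \<Delta>2"
  using sub2(2) unfolding facets_def by blast

lemma S_fac: "S \<in> facets \<Delta> \<Longrightarrow> S \<in> facets \<Delta>1 \<and> S \<in> facets \<Delta>2"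
  using fac_in1 fac_in2 S1 S2 by blast

lemma fac12_disj: "F \<in> facets \<Delta>1 \<Longrightarrow> F \<in> facets \<Delta>2 \<Longrightarrow> F = S"
proof -
  assume F: "F \<in> facets \<Delta>1" "F \<in> facets \<Delta>2"
  then have "F \<subseteq> S" using sep unfolding facets_def by blast
  then show "F = S" using F S1 unfolding facets_def by blast
qed

definition F0 where "F0 = (SOME F. F \<in> facets \<Delta> \<and> S \<subseteq> F)"

lemma F0: "F0 \<in> facets \<Delta>" "S \<subseteq> F0"
proof -
  have "S \<in> \<Delta>" using S1 sub1(2) by blast
  then have "\<exists>F. F \<in> facets \<Delta> \<and> S \<subseteq> F" using facet_above[OF fin] by blast
  then show "F0 \<in> facets \<Delta>" "S \<subseteq> F0" unfolding F0_def by (metis (mono_tags, lifting) someI_ex)+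
qed

lemma F0_S: "F0 = S \<longleftrightarrow> S \<in> facets \<Delta>"
proof
  assume "F0 = S" then show "S \<in> facets \<Delta>" using F0 by simp
next
  assume "S \<in> facets \<Delta>"
  then show "F0 = S" using F0 unfolding facets_def by blast
qed

abbreviation "O1 \<equiv> \<Union>\<Delta>1 - H"
abbreviation "O2 \<equiv> \<Union>\<Delta>2 - H"
abbreviation "H1 \<equiv> H \<inter> \<Union>\<Delta>1"
abbreviation "H2 \<equiv> H \<inter> \<Union>\<Delta>2"

lemma H_split: "H = H1 \<union> H2" "H1 \<inter> H2 = {}"
  using hid V_un V12 HS by blast+

lemma restrict_mrg1:
  assumes "F \<in> \<Delta>1"
  shows "restrict (mrg H1 (restrict j H1) (restrict i O1)) F = restrict (mrg H j i) F"
  using assms by (auto simp: restrict_def mrg_def fun_eq_iff)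

lemma restrict_mrg2:
  assumes "F \<in> \<Delta>2"
  shows "restrict (mrg H2 (restrict j H2) (restrict i O2)) F = restrict (mrg H j i) F"
  using assms by (auto simp: restrict_def mrg_def fun_eq_iff)

definition chi :: "(nat \<Rightarrow> nat) \<Rightarrow> (nat set \<times> (nat \<Rightarrow> nat) + nat set \<times> (nat \<Rightarrow> nat), 'k::comm_ring_1) mpoly" where
  "chi i = mp_rename Inl (PhiH \<Delta>1 d H1 (restrict i O1)) * mp_rename Inr (PhiH \<Delta>2 d H2 (restrict i O2))"

lemma chi_eq:
  "(chi i :: (_, 'k::comm_ring_1) mpoly) = (\<Sum>j\<in>Dset d H.
     (\<Prod>F\<in>facets \<Delta>1. Var (Inl (F, restrict (mrg H j i) F))) * (\<Prod>F\<in>facets \<Delta>2. Var (Inr (F, restrict (mrg H j i) F))))"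
proof -
  have "(chi i :: (_, 'k) mpoly) = (\<Sum>j1\<in>Dset d H1. \<Sum>j2\<in>Dset d H2.
     (\<Prod>F\<in>facets \<Delta>1. Var (Inl (F, restrict (mrg H1 j1 (restrict i O1)) F))) * (\<Prod>F\<in>facets \<Delta>2. Var (Inr (F, restrict (mrg H2 j2 (restrict i O2)) F))))"
    unfolding chi_def PhiH_eq by (simp add: mp_rename_sum mp_rename_prod sum_product)
  also have "\<dots> = (\<Sum>j\<in>Dset d H.
     (\<Prod>F\<in>facets \<Delta>1. Var (Inl (F, restrict (mrg H1 (restrict j H1) (restrict i O1)) F))) * (\<Prod>F\<in>facets \<Delta>2. Var (Inr (F, restrict (mrg H2 (restrict j H2) (restrict i O2)) F))))"
    by (rule sum_Dset_split[OF H_split, symmetric])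
  also have "\<dots> = (\<Sum>j\<in>Dset d H.
     (\<Prod>F\<in>facets \<Delta>1. Var (Inl (F, restrict (mrg H j i) F))) * (\<Prod>F\<in>facets \<Delta>2. Var (Inr (F, restrict (mrg H j i) F))))"
    using restrict_mrg1 restrict_mrg2 by (intro sum.cong refl arg_cong2[where f = "(*)"] prod.cong) (auto simp: facets_def)
  finally show ?thesis .
qed

definition rho :: "(nat set \<times> (nat \<Rightarrow> nat) + nat set \<times> (nat \<Rightarrow> nat)) \<Rightarrow> (nat set \<times> (nat \<Rightarrow> nat), 'k::comm_ring_1) mpoly" where
  "rho = case_sum (\<lambda>(F, j). if F \<in> facets \<Delta> then Var (F, j) else 1) (\<lambda>(F, j). if F \<in> facets \<Delta> \<and> F \<noteq> S then Var (F, j) else 1)"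

lemma rho_chi: "mp_subst rho (chi i) = (PhiH \<Delta> d H i :: (_, 'k::comm_ring_1) mpoly)"
proof -
  let ?R = "\<lambda>j F. restrict (mrg H j i) F"
  have "mp_subst rho (chi i) = (\<Sum>j\<in>Dset d H.
     (\<Prod>F\<in>facets \<Delta>1. if F \<in> facets \<Delta> then Var (F, ?R j F) else 1) * (\<Prod>F\<in>facets \<Delta>2. if F \<in> facets \<Delta> \<and> F \<noteq> S then Var (F, ?R j F) else (1 :: (_, 'k) mpoly)))"
    unfolding chi_eq by (simp add: mp_subst_sum mp_subst_mult mp_subst_prod rho_def)
  also have "\<dots> = (\<Sum>j\<in>Dset d H.
     (\<Prod>F\<in>{F\<in>facets \<Delta>1. F \<in> facets \<Delta>}. Var (F, ?R j F)) * (\<Prod>F\<in>{F\<in>facets \<Delta>2. F \<in> facets \<Delta> \<and> F \<noteq> S}. (Var (F, ?R j F) :: (_, 'k) mpoly)))"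
    by (simp add: prod.inter_filter finf1 finf2)
  also have "\<dots> = (\<Sum>j\<in>Dset d H. \<Prod>F\<in>facets \<Delta>. (Var (F, ?R j F) :: (_, 'k) mpoly))"
  proof (intro sum.cong refl)
    fix j
    have eqset: "facets \<Delta> = {F\<in>facets \<Delta>1. F \<in> facets \<Delta>} \<union> {F\<in>facets \<Delta>2. F \<in> facets \<Delta> \<and> F \<noteq> S}"
      using fac_cases S_fac by blast
    have disj: "{F\<in>facets \<Delta>1. F \<in> facets \<Delta>} \<inter> {F\<in>facets \<Delta>2. F \<in> facets \<Delta> \<and> F \<noteq> S} = {}"
      using fac12_disj by blast
    show "(\<Prod>F\<in>{F\<in>facets \<Delta>1. F \<in> facets \<Delta>}. Var (F, ?R j F)) * (\<Prod>F\<in>{F\<in>facets \<Delta>2. F \<in> facets \<Delta> \<and> F \<noteq> S}. (Var (F, ?R j F) :: (_, 'k) mpoly))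
        = (\<Prod>F\<in>facets \<Delta>. Var (F, ?R j F))"
      by (subst eqset, rule prod.union_disjoint[symmetric]) (use finf1 finf2 disj in auto)
  qed
  also have "\<dots> = PhiH \<Delta> d H i" by (simp add: PhiH_eq)
  finally show ?thesis .
qed

definition ex :: "(nat \<Rightarrow> nat) \<Rightarrow> (nat set \<times> (nat \<Rightarrow> nat) + nat set \<times> (nat \<Rightarrow> nat), 'k::comm_ring_1) mpoly" where
  "ex j = (if S \<in> facets \<Delta>1 then Var (Inl (S, restrict j S)) else 1) * (if S \<in> facets \<Delta>2 then Var (Inr (S, restrict j S)) else 1)"

definition sigma :: "nat set \<times> (nat \<Rightarrow> nat) \<Rightarrow> (nat set \<times> (nat \<Rightarrow> nat) + nat set \<times> (nat \<Rightarrow> nat), 'k::comm_ring_1) mpoly" where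
  "sigma = (\<lambda>(F, j). (if F \<in> facets \<Delta>1 then Var (Inl (F, j)) else 1) * (if F \<in> facets \<Delta>2 then Var (Inr (F, j)) else 1)
      * (if F = F0 \<and> F0 \<noteq> S then ex j else 1))"

lemma restrict_S_mrg: "restrict (mrg H j i) S = restrict i S"
  using HS by (auto simp: restrict_def mrg_def fun_eq_iff)

lemma restrict_F0_S: "restrict (restrict (mrg H j i) F0) S = restrict i S"
  using HS F0(2) by (auto simp: restrict_def mrg_def fun_eq_iff)

lemma sigma_Phi: "mp_subst sigma (PhiH \<Delta> d H i) = (chi i :: (_, 'k::comm_ring_1) mpoly)"
proof -
  let ?R = "\<lambda>j F. restrict (mrg H j i) F"
  let ?L = "\<lambda>j F. (Var (Inl (F, ?R j F)) :: (_, 'k) mpoly)"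
  let ?Rt = "\<lambda>j F. (Var (Inr (F, ?R j F)) :: (_, 'k) mpoly)"
  let ?e = "(if S \<in> facets \<Delta>1 then Var (Inl (S, restrict i S)) else 1) * (if S \<in> facets \<Delta>2 then Var (Inr (S, restrict i S)) else (1 :: (_, 'k) mpoly))"
  have "mp_subst sigma (PhiH \<Delta> d H i) = (\<Sum>j\<in>Dset d H. \<Prod>F\<in>facets \<Delta>. (sigma (F, ?R j F) :: (_, 'k) mpoly))"
    by (simp add: PhiH_eq mp_subst_sum mp_subst_prod)
  also have "\<dots> = (\<Sum>j\<in>Dset d H. (\<Prod>F\<in>facets \<Delta>1. ?L j F) * (\<Prod>F\<in>facets \<Delta>2. ?Rt j F))"
  proof (intro sum.cong refl)
    fix j
    have p3: "(\<Prod>F\<in>facets \<Delta>. if F = F0 \<and> F0 \<noteq> S then ex (?R j F) else (1 :: (_, 'k) mpoly)) = (if F0 \<noteq> S then ?e else 1)"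
    proof (cases "F0 = S")
      case True then show ?thesis by simp
    next
      case False
      then have "(\<Prod>F\<in>facets \<Delta>. if F = F0 \<and> F0 \<noteq> S then ex (?R j F) else (1 :: (_, 'k) mpoly))
          = (\<Prod>F\<in>facets \<Delta>. if F = F0 then ex (?R j F) else 1)" by simp
      also have "\<dots> = ex (?R j F0)" using finf F0(1) by (simp add: prod.delta)
      also have "\<dots> = ?e" unfolding ex_def restrict_F0_S ..
      finally show ?thesis using False by simp
    qed
    have "(\<Prod>F\<in>facets \<Delta>. (sigma (F, ?R j F) :: (_, 'k) mpoly))
        = (\<Prod>F\<in>facets \<Delta>. if F \<in> facets \<Delta>1 then ?L j F else 1) * (\<Prod>F\<in>facets \<Delta>. if F \<in> facets \<Delta>2 then ?Rt j F else 1)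
          * (\<Prod>F\<in>facets \<Delta>. if F = F0 \<and> F0 \<noteq> S then ex (?R j F) else 1)"
      by (simp add: sigma_def prod.distrib)
    also have "\<dots> = (\<Prod>F\<in>{F\<in>facets \<Delta>. F \<in> facets \<Delta>1}. ?L j F) * (\<Prod>F\<in>{F\<in>facets \<Delta>. F \<in> facets \<Delta>2}. ?Rt j F)
          * (if F0 \<noteq> S then ?e else 1)"
      unfolding p3 by (simp add: prod.inter_filter finf)
    also have "\<dots> = (\<Prod>F\<in>facets \<Delta>1. ?L j F) * (\<Prod>F\<in>facets \<Delta>2. ?Rt j F)"
    proof -
      have A1: "(\<Prod>F\<in>facets \<Delta>1. ?L j F) = (\<Prod>F\<in>{F\<in>facets \<Delta>. F \<in> facets \<Delta>1}. ?L j F)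
          * (if S \<in> facets \<Delta>1 \<and> S \<notin> {F\<in>facets \<Delta>. F \<in> facets \<Delta>1} then ?L j S else 1)"
        by (rule prod_split_extra) (use finf1 fac1_in in auto)
      have A2: "(\<Prod>F\<in>facets \<Delta>2. ?Rt j F) = (\<Prod>F\<in>{F\<in>facets \<Delta>. F \<in> facets \<Delta>2}. ?Rt j F)
          * (if S \<in> facets \<Delta>2 \<and> S \<notin> {F\<in>facets \<Delta>. F \<in> facets \<Delta>2} then ?Rt j S else 1)"
        by (rule prod_split_extra) (use finf2 fac2_in in auto)
      show ?thesis
      proof (cases "S \<in> facets \<Delta>")
        case True
        then have "F0 = S" using F0_S by simp
        then show ?thesis unfolding A1 A2 using True by simp
      next
        case False
        then have "F0 \<noteq> S" using F0_S by simp
        then show ?thesis unfolding A1 A2 using False by (simp add: restrict_S_mrg mult_ac)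
      qed
    qed
    finally show "(\<Prod>F\<in>facets \<Delta>. (sigma (F, ?R j F) :: (_, 'k) mpoly)) = (\<Prod>F\<in>facets \<Delta>1. ?L j F) * (\<Prod>F\<in>facets \<Delta>2. ?Rt j F)" .
  qed
  also have "\<dots> = chi i" by (simp add: chi_eq)
  finally show ?thesis .
qed

lemma kernel_Phi_chi:
  "mp_subst (PhiH \<Delta> d H) f = (0 :: (_, 'k::comm_ring_1) mpoly) \<longleftrightarrow> mp_subst chi f = (0 :: (_, 'k) mpoly)"
proof
  assume "mp_subst (PhiH \<Delta> d H) f = (0 :: (_, 'k) mpoly)"
  then have "mp_subst sigma (mp_subst (PhiH \<Delta> d H) f) = (0 :: (_, 'k) mpoly)" by simp
  then show "mp_subst chi f = (0 :: (_, 'k) mpoly)" by (simp add: mp_subst_comp sigma_Phi)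
next
  assume "mp_subst chi f = (0 :: (_, 'k) mpoly)"
  then have "mp_subst rho (mp_subst chi f) = (0 :: (_, 'k) mpoly)" by simp
  then show "mp_subst (PhiH \<Delta> d H) f = (0 :: (_, 'k) mpoly)" by (simp add: mp_subst_comp rho_chi)
qed

abbreviation gmap :: "(nat \<Rightarrow> nat) \<Rightarrow> (nat \<Rightarrow> nat) \<times> (nat \<Rightarrow> nat)" where
  "gmap \<equiv> (\<lambda>i. (restrict i (\<Union>\<Delta>1 - H), restrict i (\<Union>\<Delta>2 - H)))"

definition hmap :: "(nat \<Rightarrow> nat) \<times> (nat \<Rightarrow> nat) \<Rightarrow> nat \<Rightarrow> nat" where
  "hmap = (\<lambda>(x, y). (\<lambda>k. if k \<in> O1 then x k else y k))"

lemma O1_eq: "\<Union>\<Delta>1 - H \<inter> \<Union>\<Delta>1 = O1" by blast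
lemma O2_eq: "\<Union>\<Delta>2 - H \<inter> \<Union>\<Delta>2 = O2" by blast

lemma S_O1: "S \<subseteq> O1" using SV1 HS by blast
lemma S_O2: "S \<subseteq> O2" using SV2 HS by blast

lemma O1_sub: "O1 \<subseteq> {1..n} - H" using V_un by blast
lemma O2_sub: "O2 \<subseteq> {1..n} - H" using V_un by blast

lemma gQ:
  assumes "i \<in> Dset d ({1..n} - H)"
  shows "restrict i O1 \<in> Dset d O1" "restrict i O2 \<in> Dset d O2"
    "unitvec (restrict (restrict i O1) S) = unitvec (restrict (restrict i O2) S)"
proof -
  show "restrict i O1 \<in> Dset d O1" "restrict i O2 \<in> Dset d O2"
    using assms O1_sub O2_sub by (auto simp: Dset_def)
  have "restrict (restrict i O1) S = restrict i S" "restrict (restrict i O2) S = restrict i S"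
    using S_O1 S_O2 by (auto simp: restrict_def fun_eq_iff)
  then show "unitvec (restrict (restrict i O1) S) = unitvec (restrict (restrict i O2) S)" by simp
qed

lemma hC:
  assumes x: "x \<in> Dset d O1" and y: "y \<in> Dset d O2" and c: "unitvec (restrict x S) = unitvec (restrict y S)"
  shows "hmap (x, y) \<in> Dset d ({1..n} - H)" "restrict (hmap (x, y)) O1 = x" "restrict (hmap (x, y)) O2 = y"
proof -
  have rs: "restrict x S = restrict y S" using unitvec_inj[OF c] .
  have xy: "x k = y k" if "k \<in> O1" "k \<in> O2" for k
  proof -
    have "k \<in> S" using that V12 by blast
    then show ?thesis using rs by (metis restrict_apply')
  qed
  have xe: "x k = undefined" if "k \<notin> O1" for k using x that by (auto simp: Dset_def PiE_def extensional_def)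
  have ye: "y k = undefined" if "k \<notin> O2" for k using y that by (auto simp: Dset_def PiE_def extensional_def)
  have xr: "x k \<in> {1..d k}" if "k \<in> O1" for k using x that by (auto simp: Dset_def)
  have yr: "y k \<in> {1..d k}" if "k \<in> O2" for k using y that by (auto simp: Dset_def)
  have o2: "k \<in> O2" if "k \<in> {1..n} - H" "k \<notin> O1" for k using that V_un by blast
  have o12: "k \<in> {1..n} - H" if "k \<in> O1 \<or> k \<in> O2" for k using that O1_sub O2_sub by blast
  show "hmap (x, y) \<in> Dset d ({1..n} - H)"
    unfolding Dset_def PiE_iff extensional_def
  proof (intro conjI ballI allI impI CollectI)
    fix k assume k: "k \<in> {1..n} - H"
    show "hmap (x, y) k \<in> {1..d k}"
      using xr[of k] yr[of k] o2[OF k] by (auto simp: hmap_def)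
  next
    fix k assume k: "k \<notin> {1..n} - H"
    then have k1: "k \<notin> O1" and k2: "k \<notin> O2" using o12 by blast+
    have "hmap (x, y) k = y k" unfolding hmap_def using k1 by (simp del: Diff_iff Union_iff)
    then show "hmap (x, y) k = undefined" using ye[OF k2] by simp
  qed
  show "restrict (hmap (x, y)) O1 = x"
    unfolding hmap_def using xe by (auto simp: fun_eq_iff)
  show "restrict (hmap (x, y)) O2 = y"
    unfolding hmap_def using xy ye by (auto simp: fun_eq_iff)
qed

lemma main_eq:
  "toric_fiber_product
          (\<lambda>i. unitvec (restrict i S)) (Dset d (\<Union>\<Delta>1 - H \<inter> \<Union>\<Delta>1))
          (\<lambda>i. unitvec (restrict i S)) (Dset d (\<Union>\<Delta>2 - H \<inter> \<Union>\<Delta>2))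
          (hidden_ideal (H \<inter> \<Union>\<Delta>1) \<Delta>1 d) (hidden_ideal (H \<inter> \<Union>\<Delta>2) \<Delta>2 d)
       = mp_rename (\<lambda>i. (restrict i (\<Union>\<Delta>1 - H), restrict i (\<Union>\<Delta>2 - H)))
           ` (hidden_ideal H \<Delta> d :: (nat \<Rightarrow> nat, 'k::field) mpoly set)"
proof -
  define U where "U = case_sum (\<lambda>x. mp_rename Inl (PhiH \<Delta>1 d H1 x)) (\<lambda>y. mp_rename Inr (PhiH \<Delta>2 d H2 y) :: (_, 'k) mpoly)"
  define W where "W = (\<lambda>(x, y). Var (Inl x) * (Var (Inr y) :: ((nat \<Rightarrow> nat) + (nat \<Rightarrow> nat), 'k) mpoly))"
  define C where "C = {(x, y). x \<in> Dset d O1 \<and> y \<in> Dset d O2 \<and> unitvec (restrict x S) = unitvec (restrict y S)}"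
  define I1 where "I1 = (hidden_ideal H1 \<Delta>1 d :: (nat \<Rightarrow> nat, 'k) mpoly set)"
  define I2 where "I2 = (hidden_ideal H2 \<Delta>2 d :: (nat \<Rightarrow> nat, 'k) mpoly set)"
  have I1_eq: "I1 = {g. vars g \<subseteq> Dset d O1 \<and> mp_subst (PhiH \<Delta>1 d H1) g = 0}"
    unfolding I1_def hidden_ideal_eq O1_eq ..
  have I2_eq: "I2 = {g. vars g \<subseteq> Dset d O2 \<and> mp_subst (PhiH \<Delta>2 d H2) g = 0}"
    unfolding I2_def hidden_ideal_eq O2_eq ..
  have tfp: "toric_fiber_product
          (\<lambda>i. unitvec (restrict i S)) (Dset d (\<Union>\<Delta>1 - H \<inter> \<Union>\<Delta>1))
          (\<lambda>i. unitvec (restrict i S)) (Dset d (\<Union>\<Delta>2 - H \<inter> \<Union>\<Delta>2))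
          (hidden_ideal (H \<inter> \<Union>\<Delta>1) \<Delta>1 d) (hidden_ideal (H \<inter> \<Union>\<Delta>2) \<Delta>2 d)
      = {F. vars F \<subseteq> C \<and> mp_subst W F \<in> ideal_gen (mp_rename Inl ` I1 \<union> mp_rename Inr ` I2)}"
    unfolding toric_fiber_product_def O1_eq O2_eq C_def W_def I1_def I2_def by simp
  have hI: "hidden_ideal H \<Delta> d = {f. vars f \<subseteq> Dset d ({1..n} - H) \<and> mp_subst (PhiH \<Delta> d H) f = (0 :: (_, 'k) mpoly)}"
    unfolding hidden_ideal_eq supp ..
  have UW: "mp_subst U (W (x, y)) = mp_rename Inl (PhiH \<Delta>1 d H1 x) * mp_rename Inr (PhiH \<Delta>2 d H2 y)" for x y
    by (simp add: U_def W_def mp_subst_mult)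
  have UL: "mp_subst U (mp_rename Inl g) = mp_rename Inl (mp_subst (PhiH \<Delta>1 d H1) g)" for g :: "(nat \<Rightarrow> nat, 'k) mpoly"
    by (simp add: mp_subst_rename mp_rename_subst U_def)
  have UR: "mp_subst U (mp_rename Inr g) = mp_rename Inr (mp_subst (PhiH \<Delta>2 d H2) g)" for g :: "(nat \<Rightarrow> nat, 'k) mpoly"
    by (simp add: mp_subst_rename mp_rename_subst U_def)
  show ?thesis
    unfolding tfp
  proof (rule set_eqI, rule iffI)
    fix F assume "F \<in> {F. vars F \<subseteq> C \<and> mp_subst W F \<in> ideal_gen (mp_rename Inl ` I1 \<union> mp_rename Inr ` I2)}"
    then have vF: "vars F \<subseteq> C" and idF: "mp_subst W F \<in> ideal_gen (mp_rename Inl ` I1 \<union> mp_rename Inr ` I2)" by auto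
    define f where "f = mp_rename hmap F"
    have gh: "gmap (hmap v) = v" if "v \<in> C" for v
      using that hC unfolding C_def by auto
    have Ff: "F = mp_rename gmap f"
      unfolding f_def mp_rename_rename by (rule mp_rename_id_on[symmetric]) (use gh vF in auto)
    have vf: "vars f \<subseteq> Dset d ({1..n} - H)"
      unfolding f_def using vars_rename[of hmap F] vF hC(1) unfolding C_def by fastforce
    have "mp_subst chi f = mp_subst (\<lambda>v. chi (hmap v)) F"
      unfolding f_def by (rule mp_subst_rename)
    also have "\<dots> = mp_subst (\<lambda>v. mp_subst U (W v)) F"
    proof (rule mp_subst_cong)
      fix v assume "v \<in> vars F"
      then have vC: "v \<in> C" using vF by blast
      then obtain x y where v: "v = (x, y)" by (cases v)
      have "restrict (hmap (x, y)) O1 = x" "restrict (hmap (x, y)) O2 = y"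
        using vC hC unfolding v C_def by auto
      then show "chi (hmap v) = mp_subst U (W v)"
        unfolding v UW chi_def by simp
    qed
    also have "\<dots> = mp_subst U (mp_subst W F)" by (simp add: mp_subst_comp)
    also have "\<dots> = 0"
    proof (rule ideal_gen_subst_zero[OF idF])
      fix s assume "s \<in> mp_rename Inl ` I1 \<union> mp_rename Inr ` I2"
      then show "mp_subst U s = 0"
        unfolding I1_eq I2_eq using UL UR by auto
    qed
    finally have "mp_subst chi f = (0 :: (_, 'k) mpoly)" .
    then have "f \<in> hidden_ideal H \<Delta> d"
      unfolding hI using vf kernel_Phi_chi by blast
    then show "F \<in> mp_rename gmap ` hidden_ideal H \<Delta> d"
      using Ff by blast
  next
    fix F assume "F \<in> mp_rename gmap ` (hidden_ideal H \<Delta> d :: (nat \<Rightarrow> nat, 'k) mpoly set)"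
    then obtain f where F: "F = mp_rename gmap f" and f: "f \<in> hidden_ideal H \<Delta> d" by blast
    have vf: "vars f \<subseteq> Dset d ({1..n} - H)" and zf: "mp_subst (PhiH \<Delta> d H) f = (0 :: (_, 'k) mpoly)"
      using f unfolding hI by auto
    have vF: "vars F \<subseteq> C"
      unfolding F using vars_rename[of gmap f] vf gQ unfolding C_def by fastforce
    define E where "E = mp_subst W F"
    have E_eq: "E = mp_subst (\<lambda>i. W (gmap i)) f"
      unfolding E_def F by (rule mp_subst_rename)
    have vE: "vars E \<subseteq> Inl ` Dset d O1 \<union> Inr ` Dset d O2"
    proof -
      have "vars E \<subseteq> (\<Union>i\<in>vars f. vars (W (gmap i)))"
        unfolding E_eq by (rule vars_subst)
      also have "\<dots> \<subseteq> Inl ` Dset d O1 \<union> Inr ` Dset d O2"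
      proof (rule UN_least)
        fix i assume "i \<in> vars f"
        then have i: "i \<in> Dset d ({1..n} - H)" using vf by blast
        have "vars (W (gmap i)) \<subseteq> {Inl (restrict i O1), Inr (restrict i O2)}"
          unfolding W_def using vars_mult[of "Var (Inl (restrict i O1))" "Var (Inr (restrict i O2))"] vars_Var
          by fastforce
        then show "vars (W (gmap i)) \<subseteq> Inl ` Dset d O1 \<union> Inr ` Dset d O2"
          using gQ(1,2)[OF i] by blast
      qed
      finally show ?thesis .
    qed
    have "mp_subst U E = mp_subst (\<lambda>i. mp_subst U (W (gmap i))) f"
      unfolding E_eq by (simp add: mp_subst_comp)
    also have "\<dots> = mp_subst chi f"
      by (rule mp_subst_cong) (simp add: UW chi_def)
    also have "\<dots> = 0" using zf kernel_Phi_chi by blast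
    finally have zE: "mp_subst U E = 0" .
    have "E \<in> ideal_gen (mp_rename Inl ` I1 \<union> mp_rename Inr ` I2)"
      unfolding I1_eq I2_eq
      by (rule tensor_kernel[OF vE]) (use zE in \<open>simp add: U_def\<close>)
    then show "F \<in> {F. vars F \<subseteq> C \<and> mp_subst W F \<in> ideal_gen (mp_rename Inl ` I1 \<union> mp_rename Inr ` I2)}"
      using vF unfolding E_def by blast
  qed
qed

end

theorem theorem3p6:
  fixes n :: nat and d :: "nat \<Rightarrow> nat" and H S :: "nat set"
    and \<Delta> \<Delta>1 \<Delta>2 :: "nat set set"
  assumes cx: "simplicial_complex {1..n} \<Delta>" and supp: "\<Union>\<Delta> = {1..n}"
    and d2: "\<forall>k\<in>{1..n}. 2 \<le> d k"
    and hid: "H \<subseteq> {1..n}"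
    and sub1: "simplicial_complex (\<Union>\<Delta>1) \<Delta>1" "\<Delta>1 \<subseteq> \<Delta>"
    and sub2: "simplicial_complex (\<Union>\<Delta>2) \<Delta>2" "\<Delta>2 \<subseteq> \<Delta>"
    and un: "\<Delta>1 \<union> \<Delta>2 = \<Delta>" and sep: "\<Delta>1 \<inter> \<Delta>2 = Pow S"
    and HS: "H \<inter> S = {}"
  shows "(\<forall>c :: (nat \<Rightarrow> nat) \<Rightarrow> int.
            (\<lambda>\<tau>. \<Sum>\<sigma>\<in>Dset d S. c \<sigma> * unitvec \<sigma> \<tau>) = (\<lambda>\<tau>. 0)
              \<longrightarrow> (\<forall>\<sigma>\<in>Dset d S. c \<sigma> = 0))
     \<and> homogeneous_ideal (\<lambda>i. unitvec (restrict i S)) (Dset d (\<Union>\<Delta>1 - H \<inter> \<Union>\<Delta>1))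
          (hidden_ideal (H \<inter> \<Union>\<Delta>1) \<Delta>1 d :: (nat \<Rightarrow> nat, 'k::field) mpoly set)
     \<and> homogeneous_ideal (\<lambda>i. unitvec (restrict i S)) (Dset d (\<Union>\<Delta>2 - H \<inter> \<Union>\<Delta>2))
          (hidden_ideal (H \<inter> \<Union>\<Delta>2) \<Delta>2 d :: (nat \<Rightarrow> nat, 'k) mpoly set)
     \<and> toric_fiber_product
          (\<lambda>i. unitvec (restrict i S)) (Dset d (\<Union>\<Delta>1 - H \<inter> \<Union>\<Delta>1))
          (\<lambda>i. unitvec (restrict i S)) (Dset d (\<Union>\<Delta>2 - H \<inter> \<Union>\<Delta>2))
          (hidden_ideal (H \<inter> \<Union>\<Delta>1) \<Delta>1 d) (hidden_ideal (H \<inter> \<Union>\<Delta>2) \<Delta>2 d)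
       = mp_rename (\<lambda>i. (restrict i (\<Union>\<Delta>1 - H), restrict i (\<Union>\<Delta>2 - H)))
           ` (hidden_ideal H \<Delta> d :: (nat \<Rightarrow> nat, 'k) mpoly set)"
proof -
  interpret R: reducible n d H S \<Delta> \<Delta>1 \<Delta>2
    using cx supp hid sub1 sub2 un sep HS by unfold_locales
  have finS: "finite (Dset d S)"
  proof -
    have "S \<in> \<Delta>" using R.S1 sub1(2) by blast
    then have "S \<subseteq> {1..n}" using cx by (auto simp: simplicial_complex_def)
    then show ?thesis by (intro finite_Dset) (rule finite_subset, auto)
  qed
  have A: "\<forall>c :: (nat \<Rightarrow> nat) \<Rightarrow> int.
            (\<lambda>\<tau>. \<Sum>\<sigma>\<in>Dset d S. c \<sigma> * unitvec \<sigma> \<tau>) = (\<lambda>\<tau>. 0)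
              \<longrightarrow> (\<forall>\<sigma>\<in>Dset d S. c \<sigma> = 0)"
  proof (intro allI impI ballI)
    fix c :: "(nat \<Rightarrow> nat) \<Rightarrow> int" and \<sigma>
    assume h: "(\<lambda>\<tau>. \<Sum>\<sigma>\<in>Dset d S. c \<sigma> * unitvec \<sigma> \<tau>) = (\<lambda>\<tau>. 0)" and s: "\<sigma> \<in> Dset d S"
    have "(\<Sum>\<sigma>'\<in>Dset d S. c \<sigma>' * unitvec \<sigma>' \<sigma>) = 0" using fun_cong[OF h, of \<sigma>] by simp
    moreover have "(\<Sum>\<sigma>'\<in>Dset d S. c \<sigma>' * unitvec \<sigma>' \<sigma>) = c \<sigma>"
      using finS s by (simp add: unitvec_def if_distrib cong: if_cong)
    ultimately show "c \<sigma> = 0" by simp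
  qed
  have HS1: "(H \<inter> \<Union>\<Delta>1) \<inter> S = {}" and HS2: "(H \<inter> \<Union>\<Delta>2) \<inter> S = {}" using HS by blast+
  show ?thesis
    using A homogeneous_hidden_ideal[OF R.fin1 R.S1 HS1, of d] homogeneous_hidden_ideal[OF R.fin2 R.S2 HS2, of d]
      R.main_eq by blast
qed

end
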